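(* Let $d>0$, let $J$ satisfy (J) and (J2), let $f$ satisfy (f3), and let $c_*>0$ be the minimal traveling wave speed. Then for every $c\in(0,c_* )$ there exists a semi-wave $\phi^c$ with speed $c$, i.e. a function $\phi^c\in C^1((-\infty,0])$ with values in $[0,1]$ satisfying $$d\int_{-\infty}^0J(x-y)\phi^c(y)\,dy-d\phi^c(x)+c(\phi^c)'(x)+f(\phi^c(x))=0\ (-\infty<x<0),\qquad \phi^c(-\infty)=1,\ \phi^c(0)=0,$$ and $\phi^c(x)$ is nonincreasing for $x\in(-\infty,0]$.
   Context: Condition (J): $J\in C(\mathbb{R})\cap L^\infty(\mathbb{R})$, $J\ge 0$, $J(0)>0$, $\int_{\mathbb{R}}J=1$, $J$ even. Condition (J2): there exists $\lambda>0$ with $\int_{\mathbb{R}}J(x)e^{\lambda x}dx<\infty$. Condition (f3): $f\in C^1([0,\infty))$, $f(0)=f(1)=0$, $f>0$ in $(0,1)$, $f'(0)>0>f'(1)$, $f(u)/u$ nonincreasing in $u>0$. Known fact (minimal speed): under (J), (J2), (f3) there is $c_*>0$ such that $d\int_{\mathbb{R}}J(x-y)\phi(y)dy-d\phi(x)+c\phi'(x)+f(\phi(x))=0$ on $\mathbb{R}$, $\phi(-\infty)=1$, $\phi(+\infty)=0$, has a nonincreasing solution $\phi\in L^\infty(\mathbb{R})$ if and only if $c\ge c_*$. *)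

theory Defs
  imports "HOL-Analysis.Analysis"
begin

definition cond_J :: "(real \<Rightarrow> real) \<Rightarrow> bool" where
  "cond_J J \<longleftrightarrow> continuous_on UNIV J \<and> bounded (range J) \<and>
     (\<forall>x. J x \<ge> 0) \<and> J 0 > 0 \<and> integrable lborel J \<and>
     (\<integral>x. J x \<partial>lborel) = 1 \<and> (\<forall>x. J (- x) = J x)"

definition cond_J2 :: "(real \<Rightarrow> real) \<Rightarrow> bool" where
  "cond_J2 J \<longleftrightarrow> (\<exists>l>0. integrable lborel (\<lambda>x. J x * exp (l * x)))"

text \<open>Condition (f3); f is only relevant on [0,\<infinity>).\<close>
definition cond_f3 :: "(real \<Rightarrow> real) \<Rightarrow> bool" where
  "cond_f3 f \<longleftrightarrow> (\<exists>f'. (\<forall>u\<ge>0. (f has_real_derivative f' u) (at u within {0..})) \<and>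
       continuous_on {0..} f' \<and> f' 0 > 0 \<and> f' 1 < 0) \<and>
     f 0 = 0 \<and> f 1 = 0 \<and> (\<forall>u. 0 < u \<and> u < 1 \<longrightarrow> f u > 0) \<and>
     (\<forall>u v. 0 < u \<and> u \<le> v \<longrightarrow> f v / v \<le> f u / u)"

definition tw_exists :: "real \<Rightarrow> (real \<Rightarrow> real) \<Rightarrow> (real \<Rightarrow> real) \<Rightarrow> real \<Rightarrow> bool" where
  "tw_exists d J f c \<longleftrightarrow> (\<exists>\<phi> \<phi>'. bounded (range \<phi>) \<and>
     (\<forall>x y. x \<le> y \<longrightarrow> \<phi> y \<le> \<phi> x) \<and>
     (\<forall>x. (\<phi> has_real_derivative \<phi>' x) (at x)) \<and>
     (\<forall>x. d * (\<integral>y. J (x - y) * \<phi> y \<partial>lborel) - d * \<phi> x + c * \<phi>' x + f (\<phi> x) = 0) \<and>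
     (\<phi> \<longlongrightarrow> 1) at_bot \<and> (\<phi> \<longlongrightarrow> 0) at_top)"

definition semi_wave :: "real \<Rightarrow> (real \<Rightarrow> real) \<Rightarrow> (real \<Rightarrow> real) \<Rightarrow> real \<Rightarrow> (real \<Rightarrow> real) \<Rightarrow> bool" where
  "semi_wave d J f c \<phi> \<longleftrightarrow> (\<exists>\<phi>'.
     (\<forall>x\<le>0. (\<phi> has_real_derivative \<phi>' x) (at x within {..0})) \<and> continuous_on {..0} \<phi>' \<and>
     (\<forall>x\<le>0. 0 \<le> \<phi> x \<and> \<phi> x \<le> 1) \<and>
     (\<forall>x<0. d * (LINT y:{..0}|lborel. J (x - y) * \<phi> y) - d * \<phi> x + c * \<phi>' x + f (\<phi> x) = 0) \<and>
     (\<phi> \<longlongrightarrow> 1) at_bot \<and> \<phi> 0 = 0)"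

end

theory Submission
  imports Defs "HOL-Complex_Analysis.Great_Picard"
begin

lemma antimono_meas:
  fixes \<phi> :: "real \<Rightarrow> real"
  assumes "\<And>x y. x \<le> y \<Longrightarrow> \<phi> y \<le> \<phi> x"
  shows "\<phi> \<in> borel_measurable borel"
proof -
  have "mono (\<lambda>x. - \<phi> x)" using assms by (auto simp: mono_def)
  then have "(\<lambda>x. - \<phi> x) \<in> borel_measurable borel" by (rule borel_measurable_mono)
  then have "(\<lambda>x. - (- \<phi> x)) \<in> borel_measurable borel" by measurable
  then show ?thesis by simp
qed

lemma lip_cont:
  fixes \<phi> :: "real \<Rightarrow> real"
  assumes "\<And>x y. \<bar>\<phi> x - \<phi> y\<bar> \<le> Lp * \<bar>x - y\<bar>"
  shows "continuous_on UNIV \<phi>"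
proof (rule continuous_on_iff[THEN iffD2], intro ballI allI impI)
  fix x e :: real assume "0 < e"
  define Lq where "Lq = \<bar>Lp\<bar> + 1"
  have Lq: "Lq > 0" "Lp \<le> Lq" by (auto simp: Lq_def)
  show "\<exists>d>0. \<forall>x'\<in>UNIV. dist x' x < d \<longrightarrow> dist (\<phi> x') (\<phi> x) < e"
  proof (intro exI[of _ "e / Lq"] conjI ballI impI)
    show "e / Lq > 0" using \<open>0<e\<close> Lq by simp
    fix y assume "dist y x < e / Lq"
    then have "Lq * \<bar>y - x\<bar> < e" using Lq by (simp add: dist_real_def field_simps)
    moreover have "\<bar>\<phi> y - \<phi> x\<bar> \<le> Lq * \<bar>y - x\<bar>"
      using assms[of y x] Lq by (meson abs_ge_zero mult_right_mono order_trans)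
    ultimately show "dist (\<phi> y) (\<phi> x) < e" by (simp add: dist_real_def)
  qed
qed

locale sw =
  fixes d c K Lf :: real and J f :: "real \<Rightarrow> real"
  assumes d_pos: "d > 0" and c_pos: "c > 0"
    and J_cont: "continuous_on UNIV J" and J_nonneg: "\<And>x. J x \<ge> 0"
    and J_int: "integrable lborel J" and J_one: "(\<integral>x. J x \<partial>lborel) = 1"
    and f_cont: "continuous_on {0..} f" and f0: "f 0 = 0" and f1: "f 1 = 0"
    and fpos: "\<And>u. 0 < u \<Longrightarrow> u < 1 \<Longrightarrow> f u > 0"
    and f_lip: "\<And>u v. 0 \<le> u \<Longrightarrow> u \<le> 1 \<Longrightarrow> 0 \<le> v \<Longrightarrow> v \<le> 1 \<Longrightarrow> \<bar>f u - f v\<bar> \<le> Lf * \<bar>u - v\<bar>"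
    and Lf_nonneg: "Lf \<ge> 0"
    and K_def: "K = d + Lf + 1"
begin

definition NL :: "(real \<Rightarrow> real) \<Rightarrow> real \<Rightarrow> real" where
  "NL \<phi> x = (\<integral>z. J z * \<phi> (x - z) \<partial>lborel)"

definition H :: "(real \<Rightarrow> real) \<Rightarrow> real \<Rightarrow> real" where
  "H \<phi> y = d * NL \<phi> y - d * \<phi> y + f (\<phi> y)"

definition G :: "(real \<Rightarrow> real) \<Rightarrow> real \<Rightarrow> real" where
  "G \<phi> y = H \<phi> y + K * \<phi> y"

definition T :: "real \<Rightarrow> (real \<Rightarrow> real) \<Rightarrow> real \<Rightarrow> real" where
  "T \<theta> \<phi> x = (if x \<le> 0 then exp (K * x / c) * (\<theta> + integral {x..0} (\<lambda>y. exp (- (K * y / c)) * G \<phi> y) / c) else \<theta>)"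

definition inS :: "real \<Rightarrow> (real \<Rightarrow> real) \<Rightarrow> bool" where
  "inS \<theta> \<phi> \<longleftrightarrow> (\<forall>x y. x \<le> y \<longrightarrow> \<phi> y \<le> \<phi> x) \<and> (\<forall>x. \<theta> \<le> \<phi> x \<and> \<phi> x \<le> 1) \<and> (\<forall>x\<ge>0. \<phi> x = \<theta>)"

lemma K_pos: "K > 0" and K_gt_d: "K - d \<ge> Lf" using d_pos Lf_nonneg K_def by auto

lemma J_meas[measurable]: "J \<in> borel_measurable borel"
  using J_cont by (rule borel_measurable_continuous_onI)

lemma nl_integrable:
  assumes [measurable]: "\<phi> \<in> borel_measurable borel" and B: "\<And>x. \<bar>\<phi> x\<bar> \<le> B"
  shows "integrable lborel (\<lambda>z. J z * \<phi> (x - z))"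
proof (rule Bochner_Integration.integrable_bound)
  show "integrable lborel (\<lambda>z. J z * B)" using J_int by simp
  have m1: "(\<lambda>z. \<phi> (x - z)) \<in> borel_measurable borel"
    by (rule measurable_compose[OF _ assms(1)]) simp
  show "(\<lambda>z. J z * \<phi> (x - z)) \<in> borel_measurable lborel"
    using m1 J_meas by simp
  show "AE z in lborel. norm (J z * \<phi> (x - z)) \<le> norm (J z * B)"
  proof (rule AE_I2)
    fix z
    have "\<bar>\<phi> (x - z)\<bar> \<le> \<bar>B\<bar>" using B[of "x - z"] by linarith
    then have "J z * \<bar>\<phi> (x - z)\<bar> \<le> J z * \<bar>B\<bar>" using J_nonneg[of z] by (rule mult_left_mono)
    then show "norm (J z * \<phi> (x - z)) \<le> norm (J z * B)" using J_nonneg[of z] by (simp add: abs_mult)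
  qed
qed

lemma nl_mono:
  assumes "\<phi> \<in> borel_measurable borel" "\<And>x. \<bar>\<phi> x\<bar> \<le> B"
    and "\<psi> \<in> borel_measurable borel" "\<And>x. \<bar>\<psi> x\<bar> \<le> B'"
    and le: "\<And>x. \<phi> x \<le> \<psi> x"
  shows "NL \<phi> x \<le> NL \<psi> x"
  unfolding NL_def
  by (rule integral_mono[OF nl_integrable[OF assms(1,2)] nl_integrable[OF assms(3,4)]])
     (simp add: J_nonneg le mult_left_mono)

lemma nl_const: "NL (\<lambda>_. a) x = a"
  unfolding NL_def using J_one by simp

lemma nl_bounds:
  assumes "\<phi> \<in> borel_measurable borel" "\<And>x. a \<le> \<phi> x" "\<And>x. \<phi> x \<le> b"
  shows "a \<le> NL \<phi> x" "NL \<phi> x \<le> b"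
proof -
  have B: "\<bar>\<phi> y\<bar> \<le> \<bar>a\<bar> + \<bar>b\<bar>" for y using assms(2,3)[of y] by auto
  show "a \<le> NL \<phi> x" using nl_mono[of "\<lambda>_. a" "\<bar>a\<bar>" \<phi>, OF _ _ assms(1) B assms(2)] nl_const by simp
  show "NL \<phi> x \<le> b" using nl_mono[of \<phi> _ "\<lambda>_. b" "\<bar>b\<bar>", OF assms(1) B _ _ assms(3)] nl_const by simp
qed

lemma nl_antimono:
  assumes mono: "\<And>x y. x \<le> y \<Longrightarrow> \<phi> y \<le> \<phi> x" and B: "\<And>x. \<bar>\<phi> x\<bar> \<le> B" and "x \<le> y"
  shows "NL \<phi> y \<le> NL \<phi> x"
proof -
  have m[measurable]: "\<phi> \<in> borel_measurable borel" using mono by (rule antimono_meas)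
  show ?thesis unfolding NL_def
    by (rule integral_mono[OF nl_integrable[OF m B] nl_integrable[OF m B]])
       (simp add: J_nonneg mono \<open>x \<le> y\<close> mult_left_mono)
qed

lemma nl_lip:
  assumes lip: "\<And>x y. \<bar>\<phi> x - \<phi> y\<bar> \<le> Lp * \<bar>x - y\<bar>" and B: "\<And>x. \<bar>\<phi> x\<bar> \<le> B"
  shows "\<bar>NL \<phi> x - NL \<phi> y\<bar> \<le> Lp * \<bar>x - y\<bar>"
proof -
  have m[measurable]: "\<phi> \<in> borel_measurable borel"
    using lip_cont[OF lip] by (rule borel_measurable_continuous_onI)
  have i1: "integrable lborel (\<lambda>z. J z * \<phi> (x - z))" by (rule nl_integrable[OF m B])
  have i2: "integrable lborel (\<lambda>z. J z * \<phi> (y - z))" by (rule nl_integrable[OF m B])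
  have eq: "NL \<phi> x - NL \<phi> y = (\<integral>z. J z * (\<phi> (x - z) - \<phi> (y - z)) \<partial>lborel)"
    unfolding NL_def using i1 i2 by (simp add: right_diff_distrib)
  have i3: "integrable lborel (\<lambda>z. J z * (\<phi> (x - z) - \<phi> (y - z)))"
    using i1 i2 by (simp add: right_diff_distrib)
  have i4: "integrable lborel (\<lambda>z. J z * (Lp * \<bar>x - y\<bar>))" using J_int by simp
  have "(\<integral>z. J z * (\<phi> (x - z) - \<phi> (y - z)) \<partial>lborel) \<le> (\<integral>z. J z * (Lp * \<bar>x - y\<bar>) \<partial>lborel)"
  proof (rule integral_mono[OF i3 i4])
    fix z
    have "\<bar>\<phi> (x - z) - \<phi> (y - z)\<bar> \<le> Lp * \<bar>x - y\<bar>" using lip[of "x - z" "y - z"] by simp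
    then show "J z * (\<phi> (x - z) - \<phi> (y - z)) \<le> J z * (Lp * \<bar>x - y\<bar>)"
      using J_nonneg[of z] by (intro mult_left_mono) auto
  qed
  moreover have "- (\<integral>z. J z * (Lp * \<bar>x - y\<bar>) \<partial>lborel) \<le> (\<integral>z. J z * (\<phi> (x - z) - \<phi> (y - z)) \<partial>lborel)"
  proof -
    have "(\<integral>z. J z * (- (Lp * \<bar>x - y\<bar>)) \<partial>lborel) \<le> (\<integral>z. J z * (\<phi> (x - z) - \<phi> (y - z)) \<partial>lborel)"
    proof (rule integral_mono[OF _ i3])
      show "integrable lborel (\<lambda>z. J z * (- (Lp * \<bar>x - y\<bar>)))" using J_int by simp
      fix z
      have "\<bar>\<phi> (x - z) - \<phi> (y - z)\<bar> \<le> Lp * \<bar>x - y\<bar>" using lip[of "x - z" "y - z"] by simp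
      then show "J z * (- (Lp * \<bar>x - y\<bar>)) \<le> J z * (\<phi> (x - z) - \<phi> (y - z))"
        using J_nonneg[of z] by (intro mult_left_mono) auto
    qed
    then show ?thesis by simp
  qed
  moreover have "(\<integral>z. J z * (Lp * \<bar>x - y\<bar>) \<partial>lborel) = Lp * \<bar>x - y\<bar>" using J_one by simp
  ultimately show ?thesis unfolding eq by linarith
qed

end

context sw begin

definition w :: "(real \<Rightarrow> real) \<Rightarrow> real \<Rightarrow> real" where
  "w \<phi> y = exp (- (K * y / c)) * G \<phi> y"

lemma T_w: "x \<le> 0 \<Longrightarrow> T \<theta> \<phi> x = exp (K * x / c) * (\<theta> + integral {x..0} (w \<phi>) / c)"
  unfolding T_def w_def by simp

lemma T_pos: "x \<ge> 0 \<Longrightarrow> T \<theta> \<phi> x = \<theta>"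
  unfolding T_def by auto

lemma g_mono:
  assumes "0 \<le> u" "u \<le> v" "v \<le> 1"
  shows "(K - d) * u + f u \<le> (K - d) * v + f v"
proof -
  have "\<bar>f v - f u\<bar> \<le> Lf * \<bar>v - u\<bar>" using f_lip[of v u] assms by auto
  then have "f u - f v \<le> Lf * (v - u)" using assms by auto
  also have "\<dots> \<le> (K - d) * (v - u)" using K_gt_d assms by (intro mult_right_mono) auto
  finally show ?thesis by (simp add: algebra_simps)
qed

lemma f_nonneg: "0 \<le> u \<Longrightarrow> u \<le> 1 \<Longrightarrow> f u \<ge> 0"
  using fpos[of u] f0 f1 by (cases "u = 0 \<or> u = 1") (auto simp: less_eq_real_def)

lemma inS_meas: "inS \<theta> \<phi> \<Longrightarrow> \<phi> \<in> borel_measurable borel"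
  unfolding inS_def by (intro antimono_meas) auto

lemma inS_bound: "inS \<theta> \<phi> \<Longrightarrow> 0 \<le> \<theta> \<Longrightarrow> \<bar>\<phi> x\<bar> \<le> 1"
  unfolding inS_def by (metis abs_of_nonneg order_trans)

lemma G_bounds:
  assumes S: "inS \<theta> \<phi>" and th: "0 \<le> \<theta>" "\<theta> \<le> 1"
  shows "K * \<theta> \<le> G \<phi> y" "G \<phi> y \<le> K"
proof -
  have m: "\<phi> \<in> borel_measurable borel" using S by (rule inS_meas)
  have b: "\<And>x. \<theta> \<le> \<phi> x" "\<And>x. \<phi> x \<le> 1" using S unfolding inS_def by auto
  have n1: "\<theta> \<le> NL \<phi> y" "NL \<phi> y \<le> 1" using nl_bounds[OF m b] by auto
  have G_eq: "G \<phi> y = d * NL \<phi> y + ((K - d) * \<phi> y + f (\<phi> y))"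
    unfolding G_def H_def by (simp add: algebra_simps)
  have g1: "(K - d) * \<theta> + f \<theta> \<le> (K - d) * \<phi> y + f (\<phi> y)"
    using g_mono[of \<theta> "\<phi> y"] th b by auto
  have g2: "(K - d) * \<phi> y + f (\<phi> y) \<le> (K - d) * 1 + f 1"
    using g_mono[of "\<phi> y" 1] th b by (meson order_trans order_refl)
  have "f \<theta> \<ge> 0" using f_nonneg th by auto
  have "d * \<theta> \<le> d * NL \<phi> y" "d * NL \<phi> y \<le> d" using n1 d_pos by auto
  then show "K * \<theta> \<le> G \<phi> y" "G \<phi> y \<le> K"
    unfolding G_eq using g1 g2 \<open>f \<theta> \<ge> 0\<close> f1 by (auto simp: algebra_simps)
qed

lemma G_eq: "G \<phi> y = d * NL \<phi> y + ((K - d) * \<phi> y + f (\<phi> y))"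
  unfolding G_def H_def by (simp add: algebra_simps)

lemma G_antimono:
  assumes S: "inS \<theta> \<phi>" and th: "0 \<le> \<theta>" "\<theta> \<le> 1" and "x \<le> y"
  shows "G \<phi> y \<le> G \<phi> x"
proof -
  have mono: "\<And>x y. x \<le> y \<Longrightarrow> \<phi> y \<le> \<phi> x" and b: "\<And>x. \<theta> \<le> \<phi> x" "\<And>x. \<phi> x \<le> 1"
    using S unfolding inS_def by auto
  have "NL \<phi> y \<le> NL \<phi> x"
    by (rule nl_antimono[OF mono inS_bound[OF S th(1)] \<open>x \<le> y\<close>])
  moreover have "(K - d) * \<phi> y + f (\<phi> y) \<le> (K - d) * \<phi> x + f (\<phi> x)"
    using g_mono[of "\<phi> y" "\<phi> x"] b th mono[OF \<open>x \<le> y\<close>] by (meson order_trans)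
  ultimately show ?thesis using d_pos unfolding G_eq
    by (smt (verit) mult_left_mono)
qed

lemma G_mono:
  assumes S: "inS \<theta> \<phi>" "inS \<theta>' \<psi>" and th: "0 \<le> \<theta>" "\<theta> \<le> 1" "0 \<le> \<theta>'" "\<theta>' \<le> 1"
    and le: "\<And>x. \<phi> x \<le> \<psi> x"
  shows "G \<phi> y \<le> G \<psi> y"
proof -
  have "NL \<phi> y \<le> NL \<psi> y"
    by (rule nl_mono[OF inS_meas[OF S(1)] inS_bound[OF S(1) th(1)] inS_meas[OF S(2)] inS_bound[OF S(2) th(3)] le])
  moreover have "(K - d) * \<phi> y + f (\<phi> y) \<le> (K - d) * \<psi> y + f (\<psi> y)"
    using g_mono[of "\<phi> y" "\<psi> y"] S th le unfolding inS_def by (meson order_trans)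
  ultimately show ?thesis using d_pos unfolding G_eq
    by (smt (verit) mult_left_mono)
qed

lemma w_antimono:
  assumes S: "inS \<theta> \<phi>" and th: "0 \<le> \<theta>" "\<theta> \<le> 1" and "x \<le> y"
  shows "w \<phi> y \<le> w \<phi> x"
  unfolding w_def
proof (rule mult_mono)
  show "exp (- (K * y / c)) \<le> exp (- (K * x / c))"
    using K_pos c_pos \<open>x \<le> y\<close> by (simp add: divide_right_mono mult_left_mono)
  show "G \<phi> y \<le> G \<phi> x" by (rule G_antimono[OF assms])
  show "0 \<le> exp (- (K * x / c))" by simp
  show "0 \<le> G \<phi> y" using G_bounds[OF S th, of y] K_pos th by (meson mult_nonneg_nonneg order_trans less_imp_le)
qed

lemma w_integrable:
  assumes S: "inS \<theta> \<phi>" and th: "0 \<le> \<theta>" "\<theta> \<le> 1"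
  shows "w \<phi> integrable_on {a..b}"
proof -
  have "mono_on {a..b} (\<lambda>y. - w \<phi> y)"
    by (auto simp: monotone_on_def intro!: w_antimono[OF S th])
  then have "(\<lambda>y. - w \<phi> y) integrable_on {a..b}" by (rule integrable_on_mono_on)
  then show ?thesis using integrable_neg by fastforce
qed

lemma exp_integral:
  assumes "a \<le> b"
  shows "integral {a..b} (\<lambda>y. exp (- (K * y / c))) = c / K * (exp (- (K * a / c)) - exp (- (K * b / c)))"
proof -
  have "((\<lambda>y. exp (- (K * y / c))) has_integral
          ((- (c / K) * exp (- (K * b / c))) - (- (c / K) * exp (- (K * a / c))))) {a..b}"
  proof (rule fundamental_theorem_of_calculus[OF assms])
    fix x assume "x \<in> {a..b}"
    have "((\<lambda>y. - (K * y / c)) has_real_derivative (- (K / c))) (at x within {a..b})"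
    proof -
      have "((\<lambda>y. (- (K / c)) * y) has_real_derivative (- (K / c))) (at x within {a..b})"
        using DERIV_cmult_Id by blast
      moreover have "(\<lambda>y. (- (K / c)) * y) = (\<lambda>y. - (K * y / c))" by (auto simp: field_simps)
      ultimately show ?thesis by simp
    qed
    then have "((\<lambda>y. - (c / K) * exp (- (K * y / c))) has_real_derivative
           (- (c / K) * (exp (- (K * x / c)) * (- (K / c))))) (at x within {a..b})"
      by (intro DERIV_cmult DERIV_chain2[OF DERIV_exp])
    moreover have "- (c / K) * (exp (- (K * x / c)) * (- (K / c))) = exp (- (K * x / c))"
      using K_pos c_pos by (simp add: field_simps)
    ultimately show "((\<lambda>y. - (c / K) * exp (- (K * y / c))) has_vector_derivative exp (- (K * x / c))) (at x within {a..b})"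
      by (simp add: has_real_derivative_iff_has_vector_derivative)
  qed
  then show ?thesis using c_pos by (simp add: integral_unique algebra_simps)
qed

lemma w_int_bounds:
  assumes S: "inS \<theta> \<phi>" and th: "0 \<le> \<theta>" "\<theta> \<le> 1" and ab: "a \<le> b"
    and mM: "\<And>y. y \<in> {a..b} \<Longrightarrow> m \<le> G \<phi> y \<and> G \<phi> y \<le> M"
  shows "m * (c / K * (exp (- (K * a / c)) - exp (- (K * b / c)))) \<le> integral {a..b} (w \<phi>)"
    "integral {a..b} (w \<phi>) \<le> M * (c / K * (exp (- (K * a / c)) - exp (- (K * b / c))))"
proof -
  have ie: "(\<lambda>y. exp (- (K * y / c))) integrable_on {a..b}"
    by (rule integrable_continuous_real) (use c_pos in \<open>auto intro!: continuous_intros\<close>)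
  have "integral {a..b} (\<lambda>y. m * exp (- (K * y / c))) \<le> integral {a..b} (w \<phi>)"
    by (rule integral_le[OF integrable_on_mult_right[OF ie] w_integrable[OF S th]])
       (use mM in \<open>auto simp: w_def mult.commute intro!: mult_right_mono\<close>)
  then show "m * (c / K * (exp (- (K * a / c)) - exp (- (K * b / c)))) \<le> integral {a..b} (w \<phi>)"
    using exp_integral[OF ab] by simp
  have "integral {a..b} (w \<phi>) \<le> integral {a..b} (\<lambda>y. M * exp (- (K * y / c)))"
    by (rule integral_le[OF w_integrable[OF S th] integrable_on_mult_right[OF ie]])
       (use mM in \<open>auto simp: w_def mult.commute intro!: mult_right_mono\<close>)
  then show "integral {a..b} (w \<phi>) \<le> M * (c / K * (exp (- (K * a / c)) - exp (- (K * b / c))))"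
    using exp_integral[OF ab] by simp
qed

lemma T_split:
  assumes S: "inS \<theta> \<phi>" and th: "0 \<le> \<theta>" "\<theta> \<le> 1" and x: "x1 \<le> x2" "x2 \<le> 0"
  shows "T \<theta> \<phi> x1 = exp (K * (x1 - x2) / c) * T \<theta> \<phi> x2 + exp (K * x1 / c) * integral {x1..x2} (w \<phi>) / c"
proof -
  have "integral {x1..0} (w \<phi>) = integral {x1..x2} (w \<phi>) + integral {x2..0} (w \<phi>)"
    by (rule Henstock_Kurzweil_Integration.integral_combine[OF x w_integrable[OF S th], symmetric])
  moreover have "exp (K * x1 / c) = exp (K * (x1 - x2) / c) * exp (K * x2 / c)"
  proof -
    have "K * (x1 - x2) / c + K * x2 / c = K * x1 / c" by (simp add: add_divide_distrib[symmetric] algebra_simps)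
    then show ?thesis by (simp add: exp_add[symmetric])
  qed
  ultimately show ?thesis
    using x c_pos unfolding T_w[OF order_trans[OF x]] T_w[OF x(2)] by (simp add: field_simps)
qed

lemma w_part_bounds:
  assumes S: "inS \<theta> \<phi>" and th: "0 \<le> \<theta>" "\<theta> \<le> 1" and x: "x1 \<le> x2"
    and mM: "\<And>y. y \<in> {x1..x2} \<Longrightarrow> m \<le> G \<phi> y \<and> G \<phi> y \<le> M"
  shows "m / K * (1 - exp (K * (x1 - x2) / c)) \<le> exp (K * x1 / c) * integral {x1..x2} (w \<phi>) / c"
    "exp (K * x1 / c) * integral {x1..x2} (w \<phi>) / c \<le> M / K * (1 - exp (K * (x1 - x2) / c))"
proof -
  define P where "P = exp (K * x1 / c) / c"
  define D where "D = c / K * (exp (- (K * x1 / c)) - exp (- (K * x2 / c)))"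
  define q where "q = exp (K * (x1 - x2) / c)"
  have cne: "c \<noteq> 0" using c_pos by simp
  have e1: "exp (K * x1 / c) * exp (- (K * x1 / c)) = 1" by (simp add: exp_minus_inverse)
  have e2: "exp (K * x1 / c) * exp (- (K * x2 / c)) = q"
    unfolding q_def by (subst exp_add[symmetric]) (simp add: diff_divide_distrib right_diff_distrib)
  have "P * D = exp (K * x1 / c) * (exp (- (K * x1 / c)) - exp (- (K * x2 / c))) / K"
    unfolding P_def D_def using cne by simp
  also have "\<dots> = (1 - q) / K" using e1 e2 by (simp add: right_diff_distrib)
  finally have e: "P * D = (1 - q) / K" .
  have p: "P > 0" using c_pos unfolding P_def by simp
  note bb = w_int_bounds[OF S th x mM, folded D_def]
  have "P * (m * D) \<le> P * integral {x1..x2} (w \<phi>)"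
    using bb(1) p by (intro mult_left_mono) auto
  moreover have "P * (m * D) = m / K * (1 - q)"
  proof -
    have "P * (m * D) = m * (P * D)" by (rule mult.left_commute)
    then show ?thesis using e by simp
  qed
  moreover have "P * integral {x1..x2} (w \<phi>) = exp (K * x1 / c) * integral {x1..x2} (w \<phi>) / c"
    unfolding P_def by simp
  ultimately show "m / K * (1 - exp (K * (x1 - x2) / c)) \<le> exp (K * x1 / c) * integral {x1..x2} (w \<phi>) / c"
    unfolding q_def by simp
  have "P * integral {x1..x2} (w \<phi>) \<le> P * (M * D)"
    using bb(2) p by (intro mult_left_mono) auto
  moreover have "P * (M * D) = M / K * (1 - q)"
  proof -
    have "P * (M * D) = M * (P * D)" by (rule mult.left_commute)
    then show ?thesis using e by simp
  qed
  moreover have "P * integral {x1..x2} (w \<phi>) = exp (K * x1 / c) * integral {x1..x2} (w \<phi>) / c"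
    unfolding P_def by simp
  ultimately show "exp (K * x1 / c) * integral {x1..x2} (w \<phi>) / c \<le> M / K * (1 - exp (K * (x1 - x2) / c))"
    unfolding q_def by simp
qed

end

context sw begin

lemma T_split0:
  assumes S: "inS \<theta> \<phi>" and th: "0 \<le> \<theta>" "\<theta> \<le> 1" and x: "x \<le> 0"
  shows "T \<theta> \<phi> x = exp (K * x / c) * \<theta> + exp (K * x / c) * integral {x..0} (w \<phi>) / c"
  using T_split[OF S th x order_refl] T_pos[of 0] by simp

lemma T_bounds:
  assumes S: "inS \<theta> \<phi>" and th: "0 \<le> \<theta>" "\<theta> \<le> 1"
  shows "\<theta> \<le> T \<theta> \<phi> x \<and> T \<theta> \<phi> x \<le> 1"
proof (cases "x \<le> 0")
  case False then show ?thesis using T_pos[of x] th by auto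
next
  case True
  have mM: "K * \<theta> \<le> G \<phi> y \<and> G \<phi> y \<le> K" for y using G_bounds[OF S th] by auto
  note pb = w_part_bounds[OF S th True mM]
  define q where "q = exp (K * x / c)"
  have q: "q \<le> 1" "q > 0" unfolding q_def using True K_pos c_pos
    by (auto simp: divide_nonpos_pos mult_nonneg_nonpos)
  have "K * \<theta> / K = \<theta>" "K / K = 1" using K_pos by auto
  then have p1: "\<theta> * (1 - q) \<le> exp (K * x / c) * integral {x..0} (w \<phi>) / c"
    and p2: "exp (K * x / c) * integral {x..0} (w \<phi>) / c \<le> 1 - q"
    using pb unfolding q_def by auto
  have "T \<theta> \<phi> x = q * \<theta> + exp (K * x / c) * integral {x..0} (w \<phi>) / c"
    using T_split0[OF S th True] unfolding q_def by simp
  moreover have "q * \<theta> \<le> q" using q th by (simp add: mult_left_le)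
  ultimately show ?thesis using p1 p2 by (auto simp: algebra_simps)
qed

lemma T_le_G:
  assumes S: "inS \<theta> \<phi>" and th: "0 \<le> \<theta>" "\<theta> \<le> 1" and x: "x \<le> 0"
  shows "T \<theta> \<phi> x \<le> G \<phi> x / K"
proof -
  have mM: "K * \<theta> \<le> G \<phi> y \<and> G \<phi> y \<le> G \<phi> x" if "y \<in> {x..0}" for y
    using G_bounds[OF S th] G_antimono[OF S th, of x y] that by auto
  note pb = w_part_bounds[OF S th x mM]
  define q where "q = exp (K * x / c)"
  have q: "q \<le> 1" "q > 0" unfolding q_def using x K_pos c_pos
    by (auto simp: divide_nonpos_pos mult_nonneg_nonpos)
  have th2: "\<theta> \<le> G \<phi> x / K" using G_bounds[OF S th, of x] K_pos by (simp add: field_simps)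
  have "T \<theta> \<phi> x = q * \<theta> + exp (K * x / c) * integral {x..0} (w \<phi>) / c"
    using T_split0[OF S th x] unfolding q_def by simp
  also have "\<dots> \<le> q * (G \<phi> x / K) + G \<phi> x / K * (1 - q)"
    using pb(2) th2 q unfolding q_def by (intro add_mono mult_left_mono) auto
  also have "\<dots> = G \<phi> x / K" using K_pos by (simp add: field_simps)
  finally show ?thesis .
qed

lemma T_antimono:
  assumes S: "inS \<theta> \<phi>" and th: "0 \<le> \<theta>" "\<theta> \<le> 1" and x: "x1 \<le> x2"
  shows "T \<theta> \<phi> x2 \<le> T \<theta> \<phi> x1"
proof (cases "x2 \<le> 0")
  case False then show ?thesis using T_pos[of x2] T_bounds[OF S th, of x1] by auto
next
  case True
  have mM: "G \<phi> x2 \<le> G \<phi> y \<and> G \<phi> y \<le> K" if "y \<in> {x1..x2}" for y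
    using G_bounds[OF S th] G_antimono[OF S th, of y x2] that by auto
  note pb = w_part_bounds[OF S th x mM]
  define q where "q = exp (K * (x1 - x2) / c)"
  have q: "q \<le> 1" "q > 0" unfolding q_def using x K_pos c_pos
    by (auto simp: divide_nonpos_pos mult_nonneg_nonpos)
  have "T \<theta> \<phi> x2 \<le> G \<phi> x2 / K" by (rule T_le_G[OF S th True])
  then have "T \<theta> \<phi> x2 * (1 - q) \<le> G \<phi> x2 / K * (1 - q)" using q by (intro mult_right_mono) auto
  then have "T \<theta> \<phi> x2 \<le> q * T \<theta> \<phi> x2 + exp (K * x1 / c) * integral {x1..x2} (w \<phi>) / c"
    using pb(1) unfolding q_def by (simp add: algebra_simps)
  also have "\<dots> = T \<theta> \<phi> x1" using T_split[OF S th x True] unfolding q_def by simp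
  finally show ?thesis .
qed

lemma T_inS:
  assumes S: "inS \<theta> \<phi>" and th: "0 \<le> \<theta>" "\<theta> \<le> 1"
  shows "inS \<theta> (T \<theta> \<phi>)"
  unfolding inS_def using T_antimono[OF S th] T_bounds[OF S th] T_pos by auto

lemma T_mono:
  assumes S: "inS \<theta> \<phi>" "inS \<theta> \<psi>" and th: "0 \<le> \<theta>" "\<theta> \<le> 1" and le: "\<And>x. \<phi> x \<le> \<psi> x"
  shows "T \<theta> \<phi> x \<le> T \<theta> \<psi> x"
proof (cases "x \<le> 0")
  case False then show ?thesis using T_pos by auto
next
  case True
  have "integral {x..0} (w \<phi>) \<le> integral {x..0} (w \<psi>)"
    by (rule integral_le[OF w_integrable[OF S(1) th] w_integrable[OF S(2) th]])
       (auto simp: w_def intro!: mult_left_mono G_mono[OF S th th le])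
  then show ?thesis unfolding T_w[OF True] using c_pos
    by (auto intro!: mult_left_mono divide_right_mono)
qed

lemma T_fixpoint:
  assumes th: "0 \<le> \<theta>" "\<theta> \<le> 1"
  shows "\<exists>\<phi>. inS \<theta> \<phi> \<and> T \<theta> \<phi> = \<phi>"
proof -
  define A where "A = {\<phi>. inS \<theta> \<phi> \<and> (\<forall>x. \<phi> x \<le> T \<theta> \<phi> x)}"
  define s where "s x = Sup ((\<lambda>\<phi>. \<phi> x) ` A)" for x
  have cS: "inS \<theta> (\<lambda>_. \<theta>)" unfolding inS_def using th by auto
  have cA: "(\<lambda>_. \<theta>) \<in> A" unfolding A_def using cS T_bounds[OF cS th] by auto
  have ne: "A \<noteq> {}" using cA by auto
  have bdd: "bdd_above ((\<lambda>\<phi>. \<phi> x) ` A)" for x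
    unfolding A_def inS_def by (intro bdd_aboveI[of _ 1]) auto
  have up: "\<phi> x \<le> s x" if "\<phi> \<in> A" for \<phi> x
    unfolding s_def using bdd that by (intro cSUP_upper)
  have sS: "inS \<theta> s"
    unfolding inS_def
  proof (intro conjI allI impI)
    fix x y :: real assume "x \<le> y"
    show "s y \<le> s x" unfolding s_def[of y]
    proof (rule cSUP_least[OF ne])
      fix \<phi> assume "\<phi> \<in> A"
      then have "\<phi> y \<le> \<phi> x" using \<open>x \<le> y\<close> unfolding A_def inS_def by auto
      then show "\<phi> y \<le> s x" using up[OF \<open>\<phi> \<in> A\<close>, of x] by linarith
    qed
  next
    fix x show "\<theta> \<le> s x" using up[OF cA, of x] by simp
    show "s x \<le> 1" unfolding s_def by (rule cSUP_least[OF ne]) (auto simp: A_def inS_def)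
  next
    fix x :: real assume "0 \<le> x"
    have "s x \<le> \<theta>" unfolding s_def by (rule cSUP_least[OF ne]) (use \<open>0 \<le> x\<close> in \<open>auto simp: A_def inS_def\<close>)
    then show "s x = \<theta>" using up[OF cA, of x] by simp
  qed
  have sT: "s x \<le> T \<theta> s x" for x
    unfolding s_def[of x]
  proof (rule cSUP_least[OF ne])
    fix \<phi> assume "\<phi> \<in> A"
    then have S: "inS \<theta> \<phi>" and le: "\<phi> x \<le> T \<theta> \<phi> x" for x unfolding A_def by auto
    have "T \<theta> \<phi> x \<le> T \<theta> s x" by (rule T_mono[OF S sS th up[OF \<open>\<phi> \<in> A\<close>]])
    then show "\<phi> x \<le> T \<theta> s x" using le[of x] by linarith
  qed
  have TS: "inS \<theta> (T \<theta> s)" by (rule T_inS[OF sS th])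
  have "T \<theta> s \<in> A" unfolding A_def using TS T_mono[OF sS TS th sT] by auto
  then have "T \<theta> s x \<le> s x" for x by (rule up)
  then have "T \<theta> s = s" using sT by (intro ext antisym) auto
  then show ?thesis using sS by blast
qed

lemma fix_lip0:
  assumes S: "inS \<theta> \<phi>" and th: "0 \<le> \<theta>" "\<theta> \<le> 1" and fx: "T \<theta> \<phi> = \<phi>"
    and x: "x1 \<le> x2" "x2 \<le> 0"
  shows "\<bar>\<phi> x1 - \<phi> x2\<bar> \<le> K / c * (x2 - x1)"
proof -
  have mM: "0 \<le> G \<phi> y \<and> G \<phi> y \<le> K" if "y \<in> {x1..x2}" for y
    using G_bounds[OF S th, of y] K_pos th by (auto intro: order_trans[rotated] mult_nonneg_nonneg)
  note pb = w_part_bounds[OF S th x(1) mM]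
  define q where "q = exp (K * (x1 - x2) / c)"
  have q: "q \<le> 1" "q > 0" unfolding q_def using x K_pos c_pos
    by (auto simp: divide_nonpos_pos mult_nonneg_nonpos)
  have e: "\<phi> x1 = q * \<phi> x2 + exp (K * x1 / c) * integral {x1..x2} (w \<phi>) / c"
    using T_split[OF S th x] fx unfolding q_def by simp
  have p2: "exp (K * x1 / c) * integral {x1..x2} (w \<phi>) / c \<le> 1 - q"
    using pb(2) K_pos unfolding q_def by simp
  have ph: "0 \<le> \<phi> x2" "\<phi> x2 \<le> \<phi> x1" using S th x unfolding inS_def by (auto intro: order_trans)
  have "(q - 1) * \<phi> x2 \<le> 0" using q ph by (simp add: mult_nonpos_nonneg)
  then have "\<phi> x1 - \<phi> x2 \<le> 1 - q" using e p2 by (simp add: algebra_simps)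
  also have "1 - q \<le> K / c * (x2 - x1)"
  proof -
    have "1 - q \<le> - (K * (x1 - x2) / c)"
      using exp_ge_add_one_self[of "K * (x1 - x2) / c"] unfolding q_def by linarith
    also have "\<dots> = K / c * (x2 - x1)" using c_pos by (simp add: field_simps)
    finally show ?thesis .
  qed
  finally show ?thesis using ph by simp
qed

lemma fix_lip:
  assumes S: "inS \<theta> \<phi>" and th: "0 \<le> \<theta>" "\<theta> \<le> 1" and fx: "T \<theta> \<phi> = \<phi>"
  shows "\<bar>\<phi> x - \<phi> y\<bar> \<le> K / c * \<bar>x - y\<bar>"
proof -
  have cst: "\<phi> x = \<theta>" if "x \<ge> 0" for x using S that unfolding inS_def by auto
  have Kc: "K / c \<ge> 0" using K_pos c_pos by simp
  have *: "\<bar>\<phi> x1 - \<phi> x2\<bar> \<le> K / c * (x2 - x1)" if "x1 \<le> x2" for x1 x2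
  proof (cases "x2 \<le> 0")
    case True then show ?thesis using fix_lip0[OF S th fx that] by simp
  next
    case False
    show ?thesis
    proof (cases "x1 \<le> 0")
      case True
      have "\<bar>\<phi> x1 - \<phi> 0\<bar> \<le> K / c * (0 - x1)" using fix_lip0[OF S th fx True order_refl] .
      moreover have "\<phi> x2 = \<phi> 0" using cst False by simp
      moreover have "K / c * (0 - x1) \<le> K / c * (x2 - x1)" using False Kc by (intro mult_left_mono) auto
      ultimately show ?thesis by simp
    next
      case False
      have "0 \<le> K / c * (x2 - x1)" using Kc that by (intro mult_nonneg_nonneg) auto
      then show ?thesis using cst \<open>\<not> x2 \<le> 0\<close> False by simp
    qed
  qed
  show ?thesis
  proof (cases "x \<le> y")
    case True then show ?thesis using *[OF True] by simp
  next
    case False then show ?thesis using *[of y x] by (simp add: abs_minus_commute)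
  qed
qed

end

context sw begin

definition good :: "real \<Rightarrow> (real \<Rightarrow> real) \<Rightarrow> bool" where
  "good Lp \<psi> \<longleftrightarrow> (\<forall>x y. \<bar>\<psi> x - \<psi> y\<bar> \<le> Lp * \<bar>x - y\<bar>) \<and> (\<forall>x. 0 \<le> \<psi> x \<and> \<psi> x \<le> 1)"

lemma good_cont: "good Lp \<psi> \<Longrightarrow> continuous_on UNIV \<psi>"
  unfolding good_def by (intro lip_cont) auto

lemma good_meas: "good Lp \<psi> \<Longrightarrow> \<psi> \<in> borel_measurable borel"
  by (intro borel_measurable_continuous_onI good_cont)

lemma good_bound: "good Lp \<psi> \<Longrightarrow> \<bar>\<psi> x\<bar> \<le> 1"
  unfolding good_def by (metis abs_of_nonneg)

lemma good_NL_cont: "good Lp \<psi> \<Longrightarrow> continuous_on UNIV (NL \<psi>)"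
proof -
  assume g: "good Lp \<psi>"
  show ?thesis
    by (rule lip_cont[of _ Lp], rule nl_lip[of _ Lp 1]) (use g good_bound in \<open>auto simp: good_def\<close>)
qed

lemma good_f_cont: "good Lp \<psi> \<Longrightarrow> continuous_on UNIV (\<lambda>y. f (\<psi> y))"
  by (rule continuous_on_compose2[OF f_cont good_cont]) (auto simp: good_def)

lemma good_H_cont: "good Lp \<psi> \<Longrightarrow> continuous_on UNIV (H \<psi>)"
  unfolding H_def[abs_def]
  by (intro continuous_intros good_NL_cont good_f_cont good_cont) auto

lemma good_G_cont: "good Lp \<psi> \<Longrightarrow> continuous_on UNIV (G \<psi>)"
  unfolding G_def[abs_def]
  by (intro continuous_intros good_H_cont good_cont) auto

lemma good_w_cont: "good Lp \<psi> \<Longrightarrow> continuous_on UNIV (w \<psi>)"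
  unfolding w_def[abs_def] using c_pos
  by (intro continuous_intros good_G_cont) auto

definition Wform :: "(real \<Rightarrow> real) \<Rightarrow> real \<Rightarrow> real \<Rightarrow> bool" where
  "Wform \<psi> a b \<longleftrightarrow> \<psi> a * exp (- (K * a / c)) - \<psi> b * exp (- (K * b / c)) = integral {a..b} (w \<psi>) / c"

lemma regularity_within:
  assumes g: "good Lp \<psi>" and W: "\<And>a b. a \<le> b \<Longrightarrow> b \<le> B \<Longrightarrow> Wform \<psi> a b" and x: "x \<le> B"
  shows "(\<psi> has_real_derivative (- H \<psi> x / c)) (at x within {..B})"
proof -
  define a where "a = x - 1"
  have ax: "a < x" unfolding a_def by simp
  define F where "F y = exp (K * y / c) * (\<psi> a * exp (- (K * a / c)) - integral {a..y} (w \<psi>) / c)" for y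
  have eqF: "\<psi> y = F y" if "y \<in> {a..B}" for y
  proof -
    have "Wform \<psi> a y" using W that by auto
    then have "\<psi> y * exp (- (K * y / c)) = \<psi> a * exp (- (K * a / c)) - integral {a..y} (w \<psi>) / c"
      unfolding Wform_def by simp
    moreover have "exp (K * y / c) * exp (- (K * y / c)) = 1" by (simp add: exp_minus_inverse)
    ultimately show ?thesis unfolding F_def by (metis mult.assoc mult.commute mult_1)
  qed
  have wc: "continuous_on {a..B} (w \<psi>)" using good_w_cont[OF g] by (rule continuous_on_subset) auto
  have xin: "x \<in> {a..B}" using ax x by auto
  have di: "((\<lambda>u. integral {a..u} (w \<psi>)) has_real_derivative w \<psi> x) (at x within {a..B})"
    using integral_has_vector_derivative[OF wc xin] by (simp add: has_real_derivative_iff_has_vector_derivative)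
  have e1: "((\<lambda>y. K * y / c) has_real_derivative K / c) (at x within {a..B})"
  proof -
    have "((\<lambda>y. (K / c) * y) has_real_derivative K / c) (at x within {a..B})" by (rule DERIV_cmult_Id)
    moreover have "(\<lambda>y. (K / c) * y) = (\<lambda>y. K * y / c)" by auto
    ultimately show ?thesis by simp
  qed
  have h1: "((\<lambda>y. exp (K * y / c)) has_real_derivative exp (K * x / c) * (K / c)) (at x within {a..B})"
    by (rule DERIV_chain2[OF DERIV_exp e1])
  have h2: "((\<lambda>y. \<psi> a * exp (- (K * a / c)) - integral {a..y} (w \<psi>) / c) has_real_derivative
      (0 - w \<psi> x / c)) (at x within {a..B})"
    by (rule DERIV_diff[OF DERIV_const DERIV_cdivide[OF di]])
  have dF: "(F has_real_derivative
      (exp (K * x / c) * (K / c) * (\<psi> a * exp (- (K * a / c)) - integral {a..x} (w \<psi>) / c)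
       + (0 - w \<psi> x / c) * exp (K * x / c))) (at x within {a..B})"
    unfolding F_def by (rule DERIV_mult[OF h1 h2])
  have "exp (K * x / c) * (K / c) * (\<psi> a * exp (- (K * a / c)) - integral {a..x} (w \<psi>) / c)
       = K / c * F x" unfolding F_def by simp
  also have "\<dots> = K / c * \<psi> x" using eqF[OF xin] by simp
  finally have t1: "exp (K * x / c) * (K / c) * (\<psi> a * exp (- (K * a / c)) - integral {a..x} (w \<psi>) / c)
       = K / c * \<psi> x" .
  have "(0 - w \<psi> x / c) * exp (K * x / c) = - (exp (K * x / c) * exp (- (K * x / c))) * G \<psi> x / c"
    unfolding w_def by simp
  also have "\<dots> = - G \<psi> x / c" by (simp add: exp_minus_inverse)
  finally have t2: "(0 - w \<psi> x / c) * exp (K * x / c) = - G \<psi> x / c" .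
  have val: "K / c * \<psi> x + - G \<psi> x / c = - H \<psi> x / c"
    unfolding G_def using c_pos by (simp add: field_simps)
  have dF': "(F has_real_derivative (- H \<psi> x / c)) (at x within {a..B})"
    using dF unfolding t1 t2 val .
  have d1: "(\<psi> has_real_derivative (- H \<psi> x / c)) (at x within {a..B})"
    by (rule has_field_derivative_transform_within[OF dF' zero_less_one xin]) (use eqF in auto)
  have "at x within {a..B} = at x within {..B}"
    by (rule at_within_nhd[of x "{a<..}"]) (use ax in auto)
  then show ?thesis using d1 by simp
qed

lemma regularity_at:
  assumes g: "good Lp \<psi>" and W: "\<And>a b. a \<le> b \<Longrightarrow> b \<le> B \<Longrightarrow> Wform \<psi> a b" and x: "x < B"
  shows "(\<psi> has_real_derivative (- H \<psi> x / c)) (at x)"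
proof -
  have "at x within {..B} = at x within UNIV"
    by (rule at_within_nhd[of x "{..<B}"]) (use x in auto)
  then show ?thesis using regularity_within[OF g W less_imp_le[OF x]] by simp
qed

definition Dform :: "(real \<Rightarrow> real) \<Rightarrow> real \<Rightarrow> real \<Rightarrow> bool" where
  "Dform \<psi> a b \<longleftrightarrow> ((\<lambda>y. - H \<psi> y / c) has_integral (\<psi> b - \<psi> a)) {a..b}"

lemma regularity_D:
  assumes g: "good Lp \<psi>" and W: "\<And>a b. a \<le> b \<Longrightarrow> b \<le> B \<Longrightarrow> Wform \<psi> a b" and ab: "a \<le> b" "b \<le> B"
  shows "Dform \<psi> a b"
  unfolding Dform_def
proof (rule fundamental_theorem_of_calculus_interior[OF ab(1)])
  show "continuous_on {a..b} \<psi>" using good_cont[OF g] by (rule continuous_on_subset) auto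
  fix x assume "x \<in> {a<..<b}"
  then have "x < B" using ab by auto
  then show "(\<psi> has_vector_derivative - H \<psi> x / c) (at x)"
    using regularity_at[OF g W] by (simp add: has_real_derivative_iff_has_vector_derivative)
qed

lemma fix_good:
  assumes S: "inS \<theta> \<phi>" and th: "0 \<le> \<theta>" "\<theta> \<le> 1" and fx: "T \<theta> \<phi> = \<phi>"
  shows "good (K / c) \<phi>"
  unfolding good_def using fix_lip[OF S th fx] S th unfolding inS_def by (auto intro: order_trans)

lemma fix_W:
  assumes S: "inS \<theta> \<phi>" and th: "0 \<le> \<theta>" "\<theta> \<le> 1" and fx: "T \<theta> \<phi> = \<phi>"
    and ab: "a \<le> b" "b \<le> 0"
  shows "Wform \<phi> a b"
proof -
  have e: "\<phi> a = exp (K * (a - b) / c) * \<phi> b + exp (K * a / c) * integral {a..b} (w \<phi>) / c"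
    using T_split[OF S th ab] fx by simp
  have e1: "exp (K * (a - b) / c) * exp (- (K * a / c)) = exp (- (K * b / c))"
    by (subst exp_add[symmetric]) (simp add: diff_divide_distrib right_diff_distrib)
  have e2: "exp (K * a / c) * exp (- (K * a / c)) = 1" by (simp add: exp_minus_inverse)
  have "\<phi> a * exp (- (K * a / c)) = \<phi> b * (exp (K * (a - b) / c) * exp (- (K * a / c)))
      + (exp (K * a / c) * exp (- (K * a / c))) * integral {a..b} (w \<phi>) / c"
    unfolding e by (simp add: algebra_simps)
  then show ?thesis unfolding Wform_def e1 e2 by simp
qed

end

context sw begin

lemma good_limit:
  assumes g: "\<And>n. good Lp (u n)" and lim: "\<And>x. (\<lambda>n. u n x) \<longlonglongrightarrow> U x"
  shows "good Lp U"
  unfolding good_def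
proof (intro conjI allI)
  fix x y
  have "(\<lambda>n. \<bar>u n x - u n y\<bar>) \<longlonglongrightarrow> \<bar>U x - U y\<bar>" by (intro tendsto_intros lim)
  then show "\<bar>U x - U y\<bar> \<le> Lp * \<bar>x - y\<bar>"
    by (rule LIMSEQ_le_const2) (use g in \<open>auto simp: good_def\<close>)
next
  fix x
  show "0 \<le> U x" by (rule LIMSEQ_le_const[OF lim]) (use g in \<open>auto simp: good_def\<close>)
  show "U x \<le> 1" by (rule LIMSEQ_le_const2[OF lim]) (use g in \<open>auto simp: good_def\<close>)
qed

lemma nl_dct:
  assumes m: "\<And>n. v n \<in> borel_measurable borel" "V \<in> borel_measurable borel"
    and b: "\<And>n x. \<bar>v n x\<bar> \<le> 1" and lim: "\<And>x. (\<lambda>n. v n x) \<longlonglongrightarrow> V x"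
  shows "(\<lambda>n. \<integral>z. J z * v n z \<partial>lborel) \<longlonglongrightarrow> (\<integral>z. J z * V z \<partial>lborel)"
proof (rule integral_dominated_convergence[where w = J])
  show "(\<lambda>z. J z * V z) \<in> borel_measurable lborel" using m(2) J_meas by simp
  show "(\<lambda>z. J z * v n z) \<in> borel_measurable lborel" for n using m(1)[of n] J_meas by simp
  show "integrable lborel J" by (rule J_int)
  show "AE z in lborel. (\<lambda>n. J z * v n z) \<longlonglongrightarrow> J z * V z"
    by (intro AE_I2 tendsto_intros lim)
  show "AE z in lborel. norm (J z * v n z) \<le> J z" for n
  proof (rule AE_I2)
    fix z
    have "J z * \<bar>v n z\<bar> \<le> J z * 1" using b J_nonneg[of z] by (intro mult_left_mono) auto
    then show "norm (J z * v n z) \<le> J z" using J_nonneg[of z] by (simp add: abs_mult)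
  qed
qed

lemma f_bound: "0 \<le> u \<Longrightarrow> u \<le> 1 \<Longrightarrow> \<bar>f u\<bar> \<le> Lf"
proof -
  assume u: "0 \<le> u" "u \<le> 1"
  have "\<bar>f u\<bar> \<le> Lf * u" using f_lip[of u 0] f0 u by simp
  also have "\<dots> \<le> Lf" using u Lf_nonneg by (simp add: mult_left_le)
  finally show ?thesis .
qed

lemma good_NL_bounds: "good Lp \<psi> \<Longrightarrow> 0 \<le> NL \<psi> y \<and> NL \<psi> y \<le> 1"
  using nl_bounds[of \<psi> 0 1 y] good_meas[of Lp \<psi>] by (auto simp: good_def)

lemma good_G_bound: "good Lp \<psi> \<Longrightarrow> \<bar>G \<psi> y\<bar> \<le> 2 * d + Lf + K"
proof -
  assume g: "good Lp \<psi>"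
  have "\<bar>NL \<psi> y\<bar> \<le> 1" "\<bar>\<psi> y\<bar> \<le> 1" "\<bar>f (\<psi> y)\<bar> \<le> Lf"
    using good_NL_bounds[OF g] good_bound[OF g] f_bound g by (auto simp: good_def)
  then have "\<bar>d * NL \<psi> y\<bar> \<le> d" "\<bar>d * \<psi> y\<bar> \<le> d" "\<bar>K * \<psi> y\<bar> \<le> K"
    using d_pos K_pos by (auto simp: abs_mult mult_left_le)
  then show ?thesis using \<open>\<bar>f (\<psi> y)\<bar> \<le> Lf\<close> unfolding G_def H_def by linarith
qed

lemma G_limit:
  assumes g: "\<And>n. good Lp (u n)" and lim: "\<And>x. (\<lambda>n. u n x) \<longlonglongrightarrow> U x"
  shows "(\<lambda>n. G (u n) y) \<longlonglongrightarrow> G U y"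
proof -
  have gU: "good Lp U" by (rule good_limit[OF g lim])
  have "(\<lambda>n. NL (u n) y) \<longlonglongrightarrow> NL U y"
    unfolding NL_def
  proof (rule nl_dct)
    show "(\<lambda>z. u n (y - z)) \<in> borel_measurable borel" for n
      by (rule measurable_compose[OF _ good_meas[OF g]]) simp
    show "(\<lambda>z. U (y - z)) \<in> borel_measurable borel"
      by (rule measurable_compose[OF _ good_meas[OF gU]]) simp
    show "\<bar>u n (y - z)\<bar> \<le> 1" for n z using good_bound[OF g] .
    show "(\<lambda>n. u n (y - z)) \<longlonglongrightarrow> U (y - z)" for z by (rule lim)
  qed
  moreover have "(\<lambda>n. f (u n y)) \<longlonglongrightarrow> f (U y)"
    by (rule continuous_on_tendsto_compose[OF f_cont lim]) (use g gU in \<open>auto simp: good_def\<close>)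
  ultimately show ?thesis unfolding G_def H_def by (intro tendsto_intros lim)
qed

lemma W_limit:
  assumes g: "\<And>n. good Lp (u n)" and lim: "\<And>x. (\<lambda>n. u n x) \<longlonglongrightarrow> U x"
    and ab: "a \<le> b" and ev: "eventually (\<lambda>n. Wform (u n) a b) sequentially"
  shows "Wform U a b"
proof -
  define Bd where "Bd = exp (- (K * a / c)) * (2 * d + Lf + K)"
  have wb: "norm (w (u n) y) \<le> Bd" if "y \<in> {a..b}" for n y
  proof -
    have "exp (- (K * y / c)) \<le> exp (- (K * a / c))"
      using that K_pos c_pos by (auto simp: divide_right_mono mult_left_mono)
    then show ?thesis unfolding w_def Bd_def using good_G_bound[OF g, of n y]
      by (simp add: abs_mult mult_mono)
  qed
  have wint: "w (u n) integrable_on {a..b}" for n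
    by (rule integrable_continuous_real, rule continuous_on_subset[OF good_w_cont[OF g]]) auto
  have dc: "(\<lambda>n. integral {a..b} (w (u n))) \<longlonglongrightarrow> integral {a..b} (w U)"
  proof (rule dominated_convergence(2)[OF wint, of "\<lambda>_. Bd"])
    show "(\<lambda>_. Bd) integrable_on {a..b}" by (rule integrable_const_ivl)
    show "norm (w (u n) y) \<le> Bd" if "y \<in> {a..b}" for n y using wb that .
    show "(\<lambda>n. w (u n) y) \<longlonglongrightarrow> w U y" if "y \<in> {a..b}" for y
      unfolding w_def by (intro tendsto_intros G_limit[OF g lim])
  qed
  have L: "(\<lambda>n. u n a * exp (- (K * a / c)) - u n b * exp (- (K * b / c)))
      \<longlonglongrightarrow> U a * exp (- (K * a / c)) - U b * exp (- (K * b / c))"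
    by (intro tendsto_intros lim)
  have R: "(\<lambda>n. integral {a..b} (w (u n)) / c) \<longlonglongrightarrow> integral {a..b} (w U) / c"
    using c_pos by (intro tendsto_intros dc) auto
  have "(\<lambda>n. integral {a..b} (w (u n)) / c) \<longlonglongrightarrow> U a * exp (- (K * a / c)) - U b * exp (- (K * b / c))"
    by (rule Lim_transform_eventually[OF L]) (use ev in \<open>auto simp: Wform_def elim: eventually_mono\<close>)
  with R show ?thesis unfolding Wform_def using LIMSEQ_unique by blast
qed

end

context sw begin

lemma antimono_lim_bot:
  fixes U :: "real \<Rightarrow> real"
  assumes mono: "\<And>x y. x \<le> y \<Longrightarrow> U y \<le> U x" and b: "\<And>x. 0 \<le> U x \<and> U x \<le> (1::real)"
  shows "(U \<longlongrightarrow> (SUP x. U x)) at_bot"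
proof (rule order_tendstoI)
  have bdd: "bdd_above (range U)" using b by (intro bdd_aboveI[of _ 1]) auto
  fix a assume "a < (SUP x. U x)"
  then obtain x0 where "a < U x0" using less_cSUP_iff[OF _ bdd] by blast
  show "eventually (\<lambda>y. a < U y) at_bot"
  proof (rule eventually_at_bot_linorderI[of x0])
    fix y assume "y \<le> x0"
    then show "a < U y" using mono[of y x0] \<open>a < U x0\<close> by linarith
  qed
next
  have bdd: "bdd_above (range U)" using b by (intro bdd_aboveI[of _ 1]) auto
  fix a assume "(SUP x. U x) < a"
  then show "eventually (\<lambda>y. U y < a) at_bot"
    using cSUP_upper[OF _ bdd] by (intro always_eventually) (meson UNIV_I le_less_trans)
qed

lemma antimono_lim_top:
  fixes U :: "real \<Rightarrow> real"
  assumes mono: "\<And>x y. x \<le> y \<Longrightarrow> U y \<le> U x" and b: "\<And>x. 0 \<le> U x \<and> U x \<le> (1::real)"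
  shows "(U \<longlongrightarrow> (INF x. U x)) at_top"
proof (rule order_tendstoI)
  have bdd: "bdd_below (range U)" using b by (intro bdd_belowI[of _ 0]) auto
  fix a assume "(INF x. U x) < a"
  then obtain x0 where "U x0 < a" using cINF_less_iff[OF _ bdd] by blast
  show "eventually (\<lambda>y. U y < a) at_top"
  proof (rule eventually_at_top_linorderI[of x0])
    fix y assume "x0 \<le> y"
    then show "U y < a" using mono[of x0 y] \<open>U x0 < a\<close> by linarith
  qed
next
  have bdd: "bdd_below (range U)" using b by (intro bdd_belowI[of _ 0]) auto
  fix a assume "a < (INF x. U x)"
  then show "eventually (\<lambda>y. a < U y) at_top"
    using cINF_lower[OF bdd] by (intro always_eventually) (meson UNIV_I less_le_trans)
qed

lemma H_seq:
  assumes g: "good Lp U" and lim: "\<And>z. (\<lambda>n. U (X n - z)) \<longlonglongrightarrow> l" and l: "0 \<le> l" "l \<le> 1"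
  shows "(\<lambda>n. H U (X n)) \<longlonglongrightarrow> f l"
proof -
  have "(\<lambda>n. NL U (X n)) \<longlonglongrightarrow> (\<integral>z. J z * l \<partial>lborel)"
    unfolding NL_def
  proof (rule nl_dct)
    show "(\<lambda>z. U (X n - z)) \<in> borel_measurable borel" for n
      by (rule measurable_compose[OF _ good_meas[OF g]]) simp
    show "(\<lambda>z. l) \<in> borel_measurable borel" by simp
    show "\<bar>U (X n - z)\<bar> \<le> 1" for n z using good_bound[OF g] .
    show "(\<lambda>n. U (X n - z)) \<longlonglongrightarrow> l" for z by (rule lim)
  qed
  then have n: "(\<lambda>n. NL U (X n)) \<longlonglongrightarrow> l" using J_one by simp
  have u: "(\<lambda>n. U (X n)) \<longlonglongrightarrow> l" using lim[of 0] by simp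
  have fu: "(\<lambda>n. f (U (X n))) \<longlonglongrightarrow> f l"
    by (rule continuous_on_tendsto_compose[OF f_cont u]) (use g l in \<open>auto simp: good_def\<close>)
  have "(\<lambda>n. d * NL U (X n) - d * U (X n) + f (U (X n))) \<longlonglongrightarrow> d * l - d * l + f l"
    by (intro tendsto_intros n u fu)
  then show ?thesis unfolding H_def by simp
qed

lemma H_lim_bot:
  assumes g: "good Lp U" and lim: "(U \<longlongrightarrow> l) at_bot" and l: "0 \<le> l" "l \<le> 1"
  shows "(H U \<longlongrightarrow> f l) at_bot"
proof (rule tendsto_at_botI_sequentially)
  fix X :: "nat \<Rightarrow> real" assume X: "filterlim X at_bot sequentially"
  show "(\<lambda>n. H U (X n)) \<longlonglongrightarrow> f l"
  proof (rule H_seq[OF g _ l])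
    fix z
    have "filterlim (\<lambda>n. X n - z) at_bot sequentially"
      unfolding filterlim_at_bot
    proof
      fix Z
      have "eventually (\<lambda>n. X n \<le> Z + z) sequentially" using X unfolding filterlim_at_bot by blast
      then show "eventually (\<lambda>n. X n - z \<le> Z) sequentially" by (rule eventually_mono) simp
    qed
    then show "(\<lambda>n. U (X n - z)) \<longlonglongrightarrow> l" by (rule filterlim_compose[OF lim])
  qed
qed

lemma H_lim_top:
  assumes g: "good Lp U" and lim: "(U \<longlongrightarrow> l) at_top" and l: "0 \<le> l" "l \<le> 1"
  shows "(H U \<longlongrightarrow> f l) at_top"
proof (rule tendsto_at_topI_sequentially)
  fix X :: "nat \<Rightarrow> real" assume X: "filterlim X at_top sequentially"
  show "(\<lambda>n. H U (X n)) \<longlonglongrightarrow> f l"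
  proof (rule H_seq[OF g _ l])
    fix z
    have "filterlim (\<lambda>n. X n - z) at_top sequentially"
      unfolding filterlim_at_top
    proof
      fix Z
      have "eventually (\<lambda>n. Z + z \<le> X n) sequentially" using X unfolding filterlim_at_top by blast
      then show "eventually (\<lambda>n. Z \<le> X n - z) sequentially" by (rule eventually_mono) simp
    qed
    then show "(\<lambda>n. U (X n - z)) \<longlonglongrightarrow> l" by (rule filterlim_compose[OF lim])
  qed
qed

lemma growth1:
  assumes D: "Dform U a b" and ab: "a \<le> b" and h: "\<And>y. y \<in> {a..b} \<Longrightarrow> \<delta> \<le> H U y"
  shows "\<delta> / c * (b - a) \<le> U a - U b"
proof -
  have ci: "((\<lambda>y. - \<delta> / c) has_integral ((b - a) * (- \<delta> / c))) {a..b}"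
    using has_integral_const_real[of "- \<delta> / c" a b] ab by simp
  have "U b - U a \<le> (b - a) * (- \<delta> / c)"
    by (rule has_integral_le[OF D[unfolded Dform_def] ci])
       (use h c_pos in \<open>auto intro!: divide_right_mono\<close>)
  then show ?thesis using ab by (simp add: algebra_simps)
qed

lemma growth2:
  assumes D: "Dform U a b" and ab: "a \<le> b" and h: "\<And>y. y \<in> {a..b} \<Longrightarrow> H U y \<le> - \<delta>"
  shows "\<delta> / c * (b - a) \<le> U b - U a"
proof -
  have ci: "((\<lambda>y. \<delta> / c) has_integral ((b - a) * (\<delta> / c))) {a..b}"
    using has_integral_const_real[of "\<delta> / c" a b] ab by simp
  have "(b - a) * (\<delta> / c) \<le> U b - U a"
  proof (rule has_integral_le[OF ci D[unfolded Dform_def]])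
    fix x assume "x \<in> {a..b}"
    then have "\<delta> \<le> - H U x" using h by force
    then have "\<delta> / c \<le> (- H U x) / c" by (rule divide_right_mono) (use c_pos in auto)
    then show "\<delta> / c \<le> - H U x / c" by simp
  qed
  then show ?thesis using ab by (simp add: algebra_simps)
qed

lemma growth_contra:
  assumes "\<delta> > 0"
  shows "\<delta> / c * (c / \<delta> + 1) > 1"
proof -
  have "\<delta> / c * (c / \<delta> + 1) = 1 + \<delta> / c" using assms c_pos by (simp add: field_simps)
  then show ?thesis using assms c_pos by simp
qed

lemma near_pos: "\<bar>h - F\<bar> < \<bar>F\<bar> / 2 \<Longrightarrow> F > 0 \<Longrightarrow> \<bar>F\<bar> / 2 \<le> (h::real)"
  by (auto simp: abs_if split: if_splits)

lemma near_neg: "\<bar>h - F\<bar> < \<bar>F\<bar> / 2 \<Longrightarrow> \<not> F > 0 \<Longrightarrow> F \<noteq> 0 \<Longrightarrow> (h::real) \<le> - (\<bar>F\<bar> / 2)"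
  by (auto simp: abs_if split: if_splits)

lemma bot_zero:
  assumes g: "good Lp U" and mono: "\<And>x y. x \<le> y \<Longrightarrow> U y \<le> U x"
    and D: "\<And>a b. a \<le> b \<Longrightarrow> b \<le> B \<Longrightarrow> Dform U a b"
  shows "(U \<longlongrightarrow> (SUP x. U x)) at_bot" "f (SUP x. U x) = 0"
proof -
  define l where "l = (SUP x. U x)"
  have b: "\<And>x. 0 \<le> U x \<and> U x \<le> 1" using g unfolding good_def by auto
  have bdd: "bdd_above (range U)" using b by (intro bdd_aboveI[of _ 1]) auto
  have l0: "0 \<le> l" unfolding l_def using cSUP_upper[OF _ bdd, of 0] b[of 0] by auto
  have l1: "l \<le> 1" unfolding l_def by (rule cSUP_least) (use b in auto)
  note l = l0 l1
  show lim: "(U \<longlongrightarrow> (SUP x. U x)) at_bot" by (rule antimono_lim_bot[OF mono b])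
  have Hl: "(H U \<longlongrightarrow> f l) at_bot" using H_lim_bot[OF g lim[folded l_def] l] .
  show "f (SUP x. U x) = 0" unfolding l_def[symmetric]
  proof (rule ccontr)
    assume ne: "f l \<noteq> 0"
    define \<delta> where "\<delta> = \<bar>f l\<bar> / 2"
    have dp: "\<delta> > 0" using ne unfolding \<delta>_def by simp
    have "eventually (\<lambda>y. dist (H U y) (f l) < \<delta>) at_bot" by (rule tendstoD[OF Hl dp])
    then obtain y0 where y0: "\<And>y. y \<le> y0 \<Longrightarrow> \<bar>H U y - f l\<bar> < \<delta>"
      unfolding eventually_at_bot_linorder dist_real_def by blast
    define b0 where "b0 = min y0 B"
    define a where "a = b0 - (c / \<delta> + 1)"
    have "c / \<delta> > 0" using dp c_pos by simp
    then have ab: "a \<le> b0" unfolding a_def by simp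
    have Dab: "Dform U a b0" by (rule D[OF ab]) (simp add: b0_def)
    have in0: "\<And>y. y \<in> {a..b0} \<Longrightarrow> \<bar>H U y - f l\<bar> < \<delta>" using y0 unfolding b0_def by auto
    have len: "b0 - a = c / \<delta> + 1" unfolding a_def by simp
    show False
    proof (cases "f l > 0")
      case True
      have "\<delta> / c * (b0 - a) \<le> U a - U b0"
        by (rule growth1[OF Dab ab]) (use in0 True near_pos in \<open>force simp: \<delta>_def\<close>)
      then show False using growth_contra[OF dp] b[of a] b[of b0] unfolding len by linarith
    next
      case False
      have "\<delta> / c * (b0 - a) \<le> U b0 - U a"
        by (rule growth2[OF Dab ab]) (use in0 False ne near_neg in \<open>force simp: \<delta>_def\<close>)
      then show False using growth_contra[OF dp] b[of a] b[of b0] unfolding len by linarith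
    qed
  qed
qed

lemma top_zero:
  assumes g: "good Lp U" and mono: "\<And>x y. x \<le> y \<Longrightarrow> U y \<le> U x"
    and D: "\<And>a b. a \<le> b \<Longrightarrow> Dform U a b"
  shows "(U \<longlongrightarrow> (INF x. U x)) at_top" "f (INF x. U x) = 0"
proof -
  define l where "l = (INF x. U x)"
  have b: "\<And>x. 0 \<le> U x \<and> U x \<le> 1" using g unfolding good_def by auto
  have bdd: "bdd_below (range U)" using b by (intro bdd_belowI[of _ 0]) auto
  have l1: "l \<le> 1" unfolding l_def using cINF_lower[OF bdd, of 0] b[of 0] by auto
  have l0: "0 \<le> l" unfolding l_def by (rule cINF_greatest) (use b in auto)
  note l = l0 l1
  show lim: "(U \<longlongrightarrow> (INF x. U x)) at_top" by (rule antimono_lim_top[OF mono b])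
  have Hl: "(H U \<longlongrightarrow> f l) at_top" using H_lim_top[OF g lim[folded l_def] l] .
  show "f (INF x. U x) = 0" unfolding l_def[symmetric]
  proof (rule ccontr)
    assume ne: "f l \<noteq> 0"
    define \<delta> where "\<delta> = \<bar>f l\<bar> / 2"
    have dp: "\<delta> > 0" using ne unfolding \<delta>_def by simp
    have "eventually (\<lambda>y. dist (H U y) (f l) < \<delta>) at_top" by (rule tendstoD[OF Hl dp])
    then obtain y0 where y0: "\<And>y. y0 \<le> y \<Longrightarrow> \<bar>H U y - f l\<bar> < \<delta>"
      unfolding eventually_at_top_linorder dist_real_def by blast
    define b0 where "b0 = y0 + (c / \<delta> + 1)"
    have "c / \<delta> > 0" using dp c_pos by simp
    then have ab: "y0 \<le> b0" unfolding b0_def by simp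
    have Dab: "Dform U y0 b0" by (rule D[OF ab])
    have in0: "\<And>y. y \<in> {y0..b0} \<Longrightarrow> \<bar>H U y - f l\<bar> < \<delta>" using y0 by auto
    have len: "b0 - y0 = c / \<delta> + 1" unfolding b0_def by simp
    show False
    proof (cases "f l > 0")
      case True
      have "\<delta> / c * (b0 - y0) \<le> U y0 - U b0"
        by (rule growth1[OF Dab ab]) (use in0 True near_pos in \<open>force simp: \<delta>_def\<close>)
      then show False using growth_contra[OF dp] b[of y0] b[of b0] unfolding len by linarith
    next
      case False
      have "\<delta> / c * (b0 - y0) \<le> U b0 - U y0"
        by (rule growth2[OF Dab ab]) (use in0 False ne near_neg in \<open>force simp: \<delta>_def\<close>)
      then show False using growth_contra[OF dp] b[of y0] b[of b0] unfolding len by linarith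
    qed
  qed
qed

end

lemma lip_compact:
  fixes u :: "nat \<Rightarrow> real \<Rightarrow> real"
  assumes b: "\<And>n x. \<bar>u n x\<bar> \<le> 1" and lip: "\<And>n x y. \<bar>u n x - u n y\<bar> \<le> Lp * \<bar>x - y\<bar>"
    and Lp: "Lp \<ge> 0"
  shows "\<exists>k U. strict_mono k \<and> (\<forall>x. (\<lambda>n. u (k n) x) \<longlonglongrightarrow> U x)"
proof -
  obtain k where k: "strict_mono (k::nat\<Rightarrow>nat)" and kq: "\<And>x. x \<in> \<rat> \<Longrightarrow> \<exists>l. (\<lambda>n. u (k n) x) \<longlonglongrightarrow> l"
    using function_convergent_subsequence[of \<rat> u 1] countable_rat b by auto
  have conv: "convergent (\<lambda>n. u (k n) x)" for x
  proof -
    have "Cauchy (\<lambda>n. u (k n) x)"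
    proof (rule metric_CauchyI)
      fix e :: real assume e: "0 < e"
      define r where "r = e / (3 * (Lp + 1))"
      have r: "r > 0" using e Lp unfolding r_def by simp
      obtain q where q: "q \<in> \<rat>" "x < q" "q < x + r" using Rats_dense_in_real[of x "x + r"] r by auto
      have xq: "\<bar>x - q\<bar> < r" using q by simp
      obtain l where "(\<lambda>n. u (k n) q) \<longlonglongrightarrow> l" using kq[OF q(1)] by blast
      then have "Cauchy (\<lambda>n. u (k n) q)" by (rule LIMSEQ_imp_Cauchy)
      then obtain N where N: "\<And>m n. N \<le> m \<Longrightarrow> N \<le> n \<Longrightarrow> dist (u (k m) q) (u (k n) q) < e / 3"
        using e metric_CauchyD[of "\<lambda>n. u (k n) q" "e / 3"] by auto
      have Lr: "Lp * \<bar>x - q\<bar> \<le> e / 3"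
      proof -
        have "Lp * \<bar>x - q\<bar> \<le> Lp * r" using xq Lp by (intro mult_left_mono) auto
        also have "\<dots> \<le> (Lp + 1) * r" using r by simp
        also have "\<dots> = e / 3" unfolding r_def using Lp by (simp add: field_simps)
        finally show ?thesis .
      qed
      show "\<exists>M. \<forall>m\<ge>M. \<forall>n\<ge>M. dist (u (k m) x) (u (k n) x) < e"
      proof (intro exI[of _ N] allI impI)
        fix m n assume mn: "N \<le> m" "N \<le> n"
        have "\<bar>u (k m) x - u (k m) q\<bar> \<le> e / 3" using lip[of "k m" x q] Lr by linarith
        moreover have "\<bar>u (k n) q - u (k n) x\<bar> \<le> e / 3" using lip[of "k n" q x] Lr by (simp add: abs_minus_commute)
        moreover have "\<bar>u (k m) q - u (k n) q\<bar> < e / 3" using N[OF mn] by (simp add: dist_real_def)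
        ultimately show "dist (u (k m) x) (u (k n) x) < e" unfolding dist_real_def by linarith
      qed
    qed
    then show ?thesis by (rule real_Cauchy_convergent)
  qed
  define U where "U x = lim (\<lambda>n. u (k n) x)" for x
  have "\<forall>x. (\<lambda>n. u (k n) x) \<longlonglongrightarrow> U x" unfolding U_def using conv by (simp add: convergent_LIMSEQ_iff)
  then show ?thesis using k by blast
qed

lemma affine_conv:
  fixes \<phi> J :: "real \<Rightarrow> real"
  shows "(\<integral>y. J (x - y) * \<phi> y \<partial>lborel) = (\<integral>z. J z * \<phi> (x - z) \<partial>lborel)"
  using lborel_integral_real_affine[of "-1" "\<lambda>y. J (x - y) * \<phi> y" x] by simp

context sw begin

lemma NL_shift: "NL (\<lambda>x. \<psi> (x + s)) y = NL \<psi> (y + s)"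
  unfolding NL_def by (simp add: algebra_simps)

lemma G_shift: "G (\<lambda>x. \<psi> (x + s)) y = G \<psi> (y + s)"
  unfolding G_def H_def NL_shift by simp

lemma H_shift: "H (\<lambda>x. \<psi> (x + s)) y = H \<psi> (y + s)"
  unfolding H_def NL_shift by simp

lemma good_shift: "good Lp \<psi> \<Longrightarrow> good Lp (\<lambda>x. \<psi> (x + s))"
proof -
  assume g: "good Lp \<psi>"
  have "\<bar>\<psi> (x + s) - \<psi> (y + s)\<bar> \<le> Lp * \<bar>x - y\<bar>" for x y
  proof -
    have "\<bar>\<psi> (x + s) - \<psi> (y + s)\<bar> \<le> Lp * \<bar>(x + s) - (y + s)\<bar>" using g unfolding good_def by blast
    then show ?thesis by simp
  qed
  then show ?thesis using g unfolding good_def by auto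
qed

lemma W_shift:
  assumes W: "Wform \<psi> (a + s) (b + s)"
  shows "Wform (\<lambda>x. \<psi> (x + s)) a b"
proof -
  define E where "E = exp (K * s / c)"
  have ex: "exp (- (K * y / c)) = E * exp (- (K * (y + s) / c))" for y
  proof -
    have arg: "K * s / c + - (K * (y + s) / c) = - (K * y / c)" using c_pos by (simp add: field_simps)
    have "E * exp (- (K * (y + s) / c)) = exp (K * s / c + - (K * (y + s) / c))"
      unfolding E_def by (simp only: exp_add)
    then show ?thesis unfolding arg by simp
  qed
  have wv: "w (\<lambda>x. \<psi> (x + s)) y = E * w \<psi> (s + y)" for y
    unfolding w_def G_shift by (subst ex[of y]) (simp add: add.commute)
  have "integral {a..b} (w (\<lambda>x. \<psi> (x + s))) = E * integral {a..b} (\<lambda>y. w \<psi> (s + y))"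
    unfolding wv by simp
  also have "integral {a..b} (\<lambda>y. w \<psi> (s + y)) = integral {a + s..b + s} (w \<psi>)"
    using integral_shift_Icc_real[of a b "w \<psi>" s] by (simp add: o_def)
  finally have I: "integral {a..b} (w (\<lambda>x. \<psi> (x + s))) = E * integral {a + s..b + s} (w \<psi>)" .
  have W': "\<psi> (a + s) * exp (- (K * (a + s) / c)) - \<psi> (b + s) * exp (- (K * (b + s) / c))
      = integral {a + s..b + s} (w \<psi>) / c" using W unfolding Wform_def by simp
  have "\<psi> (a + s) * (E * exp (- (K * (a + s) / c))) - \<psi> (b + s) * (E * exp (- (K * (b + s) / c)))
      = E * (\<psi> (a + s) * exp (- (K * (a + s) / c)) - \<psi> (b + s) * exp (- (K * (b + s) / c)))"
    by (simp add: algebra_simps)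
  also have "\<dots> = E * integral {a + s..b + s} (w \<psi>) / c" unfolding W' by simp
  finally show ?thesis unfolding Wform_def I ex[of a] ex[of b] by simp
qed

lemma sw_integral_conv:
  assumes z: "\<And>y. y > 0 \<Longrightarrow> \<psi> y = 0"
  shows "(LINT y:{..0}|lborel. J (x - y) * \<psi> y) = NL \<psi> x"
proof -
  have "(LINT y:{..0}|lborel. J (x - y) * \<psi> y) = (\<integral>y. J (x - y) * \<psi> y \<partial>lborel)"
    unfolding set_lebesgue_integral_def
    by (rule Bochner_Integration.integral_cong) (auto simp: indicator_def z)
  then show ?thesis unfolding NL_def affine_conv .
qed

end

context sw begin

lemma sup_is_1:
  assumes g: "good Lp U" and mono: "\<And>x y. x \<le> y \<Longrightarrow> U y \<le> U x"
    and W: "\<And>a b. a \<le> b \<Longrightarrow> b \<le> B \<Longrightarrow> Wform U a b" and pos: "U x1 > 0"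
  shows "(U \<longlongrightarrow> 1) at_bot"
proof -
  have D: "\<And>a b. a \<le> b \<Longrightarrow> b \<le> B \<Longrightarrow> Dform U a b" by (rule regularity_D[OF g W])
  note bz = bot_zero[OF g mono D]
  have b: "\<And>x. 0 \<le> U x \<and> U x \<le> 1" using g unfolding good_def by auto
  have bdd: "bdd_above (range U)" using b by (intro bdd_aboveI[of _ 1]) auto
  have l0: "U x1 \<le> (SUP x. U x)" using cSUP_upper[OF _ bdd, of x1] by simp
  have l1: "(SUP x. U x) \<le> 1" by (rule cSUP_least) (use b in auto)
  have "(SUP x. U x) = 1"
  proof (rule ccontr)
    assume "(SUP x. U x) \<noteq> 1"
    then have "f (SUP x. U x) > 0" using l0 l1 pos by (intro fpos) auto
    then show False using bz(2) by simp
  qed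
  then show ?thesis using bz(1) by simp
qed

lemma inf_is_0:
  assumes g: "good Lp U" and mono: "\<And>x y. x \<le> y \<Longrightarrow> U y \<le> U x"
    and W: "\<And>a b. a \<le> b \<Longrightarrow> Wform U a b" and lt: "U x1 < 1"
  shows "(U \<longlongrightarrow> 0) at_top"
proof -
  have D: "\<And>a b. a \<le> b \<Longrightarrow> Dform U a b" by (rule regularity_D[OF g W]) auto
  note bz = top_zero[OF g mono D]
  have b: "\<And>x. 0 \<le> U x \<and> U x \<le> 1" using g unfolding good_def by auto
  have bdd: "bdd_below (range U)" using b by (intro bdd_belowI[of _ 0]) auto
  have l1: "(INF x. U x) \<le> U x1" using cINF_lower[OF bdd, of x1] by simp
  have l0: "0 \<le> (INF x. U x)" by (rule cINF_greatest) (use b in auto)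
  have "(INF x. U x) = 0"
  proof (rule ccontr)
    assume "(INF x. U x) \<noteq> 0"
    then have "f (INF x. U x) > 0" using l0 l1 lt by (intro fpos) auto
    then show False using bz(2) by simp
  qed
  then show ?thesis using bz(1) by simp
qed

lemma regularity_all:
  assumes g: "good Lp \<psi>" and W: "\<And>a b. a \<le> b \<Longrightarrow> Wform \<psi> a b"
  shows "(\<psi> has_real_derivative (- H \<psi> x / c)) (at x)"
proof -
  have W': "\<And>a b. a \<le> b \<Longrightarrow> b \<le> x + 1 \<Longrightarrow> Wform \<psi> a b" using W by blast
  have xl: "x < x + 1" by simp
  show ?thesis by (rule regularity_at[OF g W' xl])
qed

lemma main:
  assumes notw: "\<not> tw_exists d J f c"
  shows "\<exists>\<phi>. semi_wave d J f c \<phi> \<and> (\<forall>x y. x \<le> y \<and> y \<le> 0 \<longrightarrow> \<phi> y \<le> \<phi> x)"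
proof -
  define \<theta> where "\<theta> n = 1 / (real n + 3)" for n :: nat
  have th: "0 \<le> \<theta> n" "\<theta> n \<le> 1" "0 < \<theta> n" "\<theta> n < 1/2" for n unfolding \<theta>_def by (auto simp: field_simps)
  have "\<forall>n. \<exists>\<phi>. inS (\<theta> n) \<phi> \<and> T (\<theta> n) \<phi> = \<phi>" using T_fixpoint th by blast
  then obtain \<phi> where phS: "\<And>n. inS (\<theta> n) (\<phi> n)" and phT: "\<And>n. T (\<theta> n) (\<phi> n) = \<phi> n" by metis
  define L where "L = K / c"
  have Lnn: "L \<ge> 0" using K_pos c_pos unfolding L_def by simp
  have gph: "good L (\<phi> n)" for n unfolding L_def by (rule fix_good[OF phS th(1,2) phT])
  have Wph: "\<And>a b. a \<le> b \<Longrightarrow> b \<le> 0 \<Longrightarrow> Wform (\<phi> n) a b" for n by (rule fix_W[OF phS th(1,2) phT])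
  have mono_ph: "\<And>x y. x \<le> y \<Longrightarrow> \<phi> n y \<le> \<phi> n x" for n using phS[of n] unfolding inS_def by auto
  have ph_pos: "\<And>x. x \<ge> 0 \<Longrightarrow> \<phi> n x = \<theta> n" for n using phS[of n] unfolding inS_def by auto
  have lim1: "(\<phi> n \<longlongrightarrow> 1) at_bot" for n
  proof -
    have W: "\<And>a b. a \<le> b \<Longrightarrow> b \<le> 0 \<Longrightarrow> Wform (\<phi> n) a b" by (rule Wph)
    have m: "\<And>x y. x \<le> y \<Longrightarrow> \<phi> n y \<le> \<phi> n x" by (rule mono_ph)
    have p: "\<phi> n 0 > 0" using ph_pos[of 0 n] th[of n] by simp
    show ?thesis by (rule sup_is_1[OF gph m W p])
  qed
  have "\<exists>t\<le>0. \<phi> n t = 1/2" for n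
  proof -
    have "eventually (\<lambda>x. 1/2 < \<phi> n x) at_bot" by (rule order_tendstoD(1)[OF lim1]) simp
    then obtain x0 where x0: "\<And>x. x \<le> x0 \<Longrightarrow> 1/2 < \<phi> n x" by (auto simp: eventually_at_bot_linorder)
    have a: "1/2 \<le> \<phi> n (min x0 0)" using x0[of "min x0 0"] by simp
    have b: "\<phi> n 0 \<le> 1/2" using ph_pos[of 0 n] th[of n] by simp
    have "continuous_on {min x0 0..0} (\<phi> n)" using good_cont[OF gph] by (rule continuous_on_subset) auto
    then obtain t where "min x0 0 \<le> t" "t \<le> 0" "\<phi> n t = 1/2"
      using IVT2'[of "\<phi> n" 0 "1/2" "min x0 0"] a b by auto
    then show ?thesis by blast
  qed
  then obtain s where s_le: "\<And>n. s n \<le> 0" and s_half: "\<And>n. \<phi> n (s n) = 1/2" by metis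
  have bph: "\<bar>\<phi> n x\<bar> \<le> 1" for n x using good_bound[OF gph] .
  have lph: "\<bar>\<phi> n x - \<phi> n y\<bar> \<le> L * \<bar>x - y\<bar>" for n x y using gph unfolding good_def by blast
  obtain k1 \<Phi> where k1: "strict_mono k1" and limP: "\<And>x. (\<lambda>n. \<phi> (k1 n) x) \<longlonglongrightarrow> \<Phi> x"
    using lip_compact[of \<phi> L, OF bph lph Lnn] by blast
  have gP: "good L \<Phi>" by (rule good_limit[OF gph limP])
  have monoP: "\<Phi> y \<le> \<Phi> x" if "x \<le> y" for x y
    by (rule LIMSEQ_le[OF limP limP]) (use mono_ph that in auto)
  have th0: "(\<lambda>n. \<theta> n) \<longlonglongrightarrow> 0"
  proof -
    have "filterlim (\<lambda>n. 3 + real n) at_top sequentially"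
      by (rule filterlim_tendsto_add_at_top[OF tendsto_const filterlim_real_sequentially])
    then have "((\<lambda>n. 1 / (3 + real n)) \<longlonglongrightarrow> 0)"
      by (intro tendsto_divide_0[OF tendsto_const] filterlim_at_top_imp_at_infinity)
    then show ?thesis unfolding \<theta>_def by (simp add: add.commute)
  qed
  have th0k: "(\<lambda>n. \<theta> (k1 n)) \<longlonglongrightarrow> 0" using LIMSEQ_subseq_LIMSEQ[OF th0 k1] by (simp add: o_def)
  have Ppos: "\<Phi> x = 0" if "x \<ge> 0" for x
  proof -
    have "(\<lambda>n. \<phi> (k1 n) x) \<longlonglongrightarrow> 0" using th0k ph_pos[OF that] by simp
    then show ?thesis using limP[of x] LIMSEQ_unique by blast
  qed
  have WP: "Wform \<Phi> a b" if "a \<le> b" "b \<le> 0" for a b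
    by (rule W_limit[OF gph limP that(1)]) (use Wph that in auto)
  show ?thesis
  proof (cases "\<exists>x. \<Phi> x > 0")
    case True
    then obtain x1 where x1: "\<Phi> x1 > 0" by blast
    have WP': "\<And>a b. a \<le> b \<Longrightarrow> b \<le> 0 \<Longrightarrow> Wform \<Phi> a b" by (rule WP)
    have mP: "\<And>x y. x \<le> y \<Longrightarrow> \<Phi> y \<le> \<Phi> x" by (rule monoP)
    have limP1: "(\<Phi> \<longlongrightarrow> 1) at_bot" by (rule sup_is_1[OF gP mP WP' x1])
    have "semi_wave d J f c \<Phi>"
      unfolding semi_wave_def
    proof (intro exI[of _ "\<lambda>x. - H \<Phi> x / c"] conjI allI impI)
      fix x :: real assume x: "x \<le> 0"
      have W: "\<And>a b. a \<le> b \<Longrightarrow> b \<le> 0 \<Longrightarrow> Wform \<Phi> a b" by (rule WP)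
      show "(\<Phi> has_real_derivative - H \<Phi> x / c) (at x within {..0})"
        by (rule regularity_within[OF gP W x])
    next
      show "continuous_on {..0} (\<lambda>x. - H \<Phi> x / c)"
      proof -
        have "continuous_on UNIV (\<lambda>x. - H \<Phi> x / c)"
          using good_H_cont[OF gP] c_pos by (intro continuous_intros) auto
        then show ?thesis by (rule continuous_on_subset) auto
      qed
    next
      fix x :: real assume "x \<le> 0"
      show "0 \<le> \<Phi> x" "\<Phi> x \<le> 1" using gP unfolding good_def by auto
    next
      fix x :: real assume "x < 0"
      have "(LINT y:{..0}|lborel. J (x - y) * \<Phi> y) = NL \<Phi> x"
        by (rule sw_integral_conv) (simp add: Ppos)
      then show "d * (LINT y:{..0}|lborel. J (x - y) * \<Phi> y) - d * \<Phi> x + c * (- H \<Phi> x / c) + f (\<Phi> x) = 0"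
        using c_pos unfolding H_def by simp
    next
      show "(\<Phi> \<longlongrightarrow> 1) at_bot" by (rule limP1)
      show "\<Phi> 0 = 0" by (rule Ppos) simp
    qed
    then show ?thesis using monoP by blast
  next
    case False
    then have P0: "\<Phi> x = 0" for x using gP unfolding good_def by (meson linorder_not_le order_antisym)
    have s_bot: "filterlim (\<lambda>n. s (k1 n)) at_bot sequentially"
      unfolding filterlim_at_bot
    proof
      fix Z :: real
      have "eventually (\<lambda>n. \<phi> (k1 n) Z < 1/2) sequentially"
        using order_tendstoD(2)[OF limP[of Z], of "1/2"] P0[of Z] by simp
      then show "eventually (\<lambda>n. s (k1 n) \<le> Z) sequentially"
      proof (rule eventually_mono)
        fix n assume "\<phi> (k1 n) Z < 1/2"
        show "s (k1 n) \<le> Z"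
        proof (rule ccontr)
          assume "\<not> s (k1 n) \<le> Z"
          then have "\<phi> (k1 n) (s (k1 n)) \<le> \<phi> (k1 n) Z" using mono_ph by simp
          then show False using s_half \<open>\<phi> (k1 n) Z < 1/2\<close> by (metis not_le)
        qed
      qed
    qed
    define v where "v n x = \<phi> (k1 n) (x + s (k1 n))" for n x
    have gv: "good L (v n)" for n unfolding v_def[abs_def] by (rule good_shift[OF gph])
    have Wv: "Wform (v n) a b" if "a \<le> b" "b \<le> - s (k1 n)" for n a b
      unfolding v_def[abs_def] by (rule W_shift, rule Wph) (use that in auto)
    have bv: "\<bar>v n x\<bar> \<le> 1" for n x using good_bound[OF gv] .
    have lv: "\<bar>v n x - v n y\<bar> \<le> L * \<bar>x - y\<bar>" for n x y using gv unfolding good_def by blast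
    obtain k2 \<Psi> where k2: "strict_mono k2" and limQ: "\<And>x. (\<lambda>n. v (k2 n) x) \<longlonglongrightarrow> \<Psi> x"
      using lip_compact[of v L, OF bv lv Lnn] by blast
    have gQ: "good L \<Psi>" by (rule good_limit[OF gv limQ])
    have monoQ: "\<Psi> y \<le> \<Psi> x" if "x \<le> y" for x y
      by (rule LIMSEQ_le[OF limQ limQ]) (use mono_ph that in \<open>auto simp: v_def\<close>)
    have Q0: "\<Psi> 0 = 1/2"
    proof -
      have "(\<lambda>n. v (k2 n) 0) = (\<lambda>n. 1/2)" unfolding v_def by (intro ext) (simp only: add_0 s_half)
      then show ?thesis using limQ[of 0] LIMSEQ_unique[OF _ tendsto_const] by metis
    qed
    have s2_bot: "filterlim (\<lambda>n. s (k1 (k2 n))) at_bot sequentially"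
      by (rule filterlim_compose[OF s_bot filterlim_subseq[OF k2]])
    have WQ: "Wform \<Psi> a b" if "a \<le> b" for a b
    proof (rule W_limit[OF gv limQ that])
      have "eventually (\<lambda>n. s (k1 (k2 n)) \<le> - b) sequentially"
        using s2_bot unfolding filterlim_at_bot by blast
      then show "eventually (\<lambda>n. Wform (v (k2 n)) a b) sequentially"
        by (rule eventually_mono) (intro Wv that, linarith)
    qed
    have A1: "bounded (range \<Psi>)" unfolding bounded_real using good_bound[OF gQ] by blast
    have A2: "\<forall>x y. x \<le> y \<longrightarrow> \<Psi> y \<le> \<Psi> x" using monoQ by blast
    have W: "\<And>a b. a \<le> b \<Longrightarrow> Wform \<Psi> a b" by (rule WQ)
    have A3: "\<forall>x. (\<Psi> has_real_derivative (- H \<Psi> x / c)) (at x)"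
      using regularity_all[OF gQ W] by blast
    have A4: "\<forall>x. d * (\<integral>y. J (x - y) * \<Psi> y \<partial>lborel) - d * \<Psi> x + c * (- H \<Psi> x / c) + f (\<Psi> x) = 0"
    proof
      fix x :: real
      have "(\<integral>y. J (x - y) * \<Psi> y \<partial>lborel) = NL \<Psi> x" unfolding NL_def by (rule affine_conv)
      then show "d * (\<integral>y. J (x - y) * \<Psi> y \<partial>lborel) - d * \<Psi> x + c * (- H \<Psi> x / c) + f (\<Psi> x) = 0"
        using c_pos unfolding H_def by simp
    qed
    have W1: "\<And>a b. a \<le> b \<Longrightarrow> b \<le> 0 \<Longrightarrow> Wform \<Psi> a b" by (rule WQ)
    have m: "\<And>x y. x \<le> y \<Longrightarrow> \<Psi> y \<le> \<Psi> x" by (rule monoQ)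
    have p1: "\<Psi> 0 > 0" "\<Psi> 0 < 1" using Q0 by auto
    have A5: "(\<Psi> \<longlongrightarrow> 1) at_bot" by (rule sup_is_1[OF gQ m W1 p1(1)])
    have A6: "(\<Psi> \<longlongrightarrow> 0) at_top" by (rule inf_is_0[OF gQ m W p1(2)])
    have "tw_exists d J f c"
      unfolding tw_exists_def
      by (rule exI[of _ \<Psi>], rule exI[of _ "\<lambda>x. - H \<Psi> x / c"]) (use A1 A2 A3 A4 A5 A6 in simp)
    then show ?thesis using notw by blast
  qed
qed

end

theorem theorem2p4:
  fixes d c_star :: real and J f :: "real \<Rightarrow> real"
  assumes "d > 0" and "cond_J J" and "cond_J2 J" and "cond_f3 f"
    and "c_star > 0" and "\<forall>c. tw_exists d J f c \<longleftrightarrow> c \<ge> c_star"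
  shows "\<forall>c. 0 < c \<and> c < c_star \<longrightarrow>
    (\<exists>\<phi>. semi_wave d J f c \<phi> \<and> (\<forall>x y. x \<le> y \<and> y \<le> 0 \<longrightarrow> \<phi> y \<le> \<phi> x))"
proof (intro allI impI)
  fix c :: real assume c: "0 < c \<and> c < c_star"
  have Jc: "continuous_on UNIV J" and Jn: "\<And>x. J x \<ge> 0" and Ji: "integrable lborel J"
    and J1: "(\<integral>x. J x \<partial>lborel) = 1"
    using assms(2) unfolding cond_J_def by auto
  obtain f' where fd: "\<And>u. u \<ge> 0 \<Longrightarrow> (f has_real_derivative f' u) (at u within {0..})"
    and f'c: "continuous_on {0..} f'"
    and f0: "f 0 = 0" and f1: "f 1 = 0" and fp: "\<And>u. 0 < u \<Longrightarrow> u < 1 \<Longrightarrow> f u > 0"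
    using assms(4) unfolding cond_f3_def by blast
  have fc: "continuous_on {0..} f"
    by (rule DERIV_continuous_on[of "{0..}" f f']) (use fd in auto)
  have "continuous_on {0..1} f'" using f'c by (rule continuous_on_subset) auto
  then obtain B where B0: "B \<ge> 0" and Bb: "\<And>x. x \<in> {0..1} \<Longrightarrow> norm (f' x) \<le> B"
    using continuous_on_compact_bound[of "{0..1::real}" f'] by auto
  have flip: "\<bar>f u - f v\<bar> \<le> B * \<bar>u - v\<bar>" if "0 \<le> u" "u \<le> 1" "0 \<le> v" "v \<le> 1" for u v
  proof -
    have "norm (f u - f v) \<le> B * norm (u - v)"
    proof (rule field_differentiable_bound[of "{0..1}" f f' B])
      show "convex {0..1::real}" by simp
      fix z :: real assume z: "z \<in> {0..1}"
      show "(f has_field_derivative f' z) (at z within {0..1})"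
        using fd[of z] z by (auto intro: DERIV_subset)
      show "norm (f' z) \<le> B" using Bb z .
    qed (use that in auto)
    then show ?thesis by simp
  qed
  have notw: "\<not> tw_exists d J f c" using assms(6) c by auto
  interpret sw d c "d + B + 1" B J f
    by unfold_locales (use assms(1) c Jc Jn Ji J1 fc f0 f1 fp flip B0 in auto)
  show "\<exists>\<phi>. semi_wave d J f c \<phi> \<and> (\<forall>x y. x \<le> y \<and> y \<le> 0 \<longrightarrow> \<phi> y \<le> \<phi> x)"
    by (rule main[OF notw])
qed

end
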